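(* Let $V$ be as in the setup below, $V^+=\{v\in V:(N^+\otimes\mathbb C_q)\cdot v=0\}$, $h\in\dot{\mathfrak h}$ and $a\in\operatorname{rad}f$. If there exists $v\in V^+$ with $(h\otimes t^a)\cdot v\neq0$, then $(h\otimes t^a)\cdot w\neq0$ for all nonzero $w\in V^+$.
   Context: Fix integers $n\ge2$, $d\ge2$. Let $q=(q_{ij})_{1\le i,j\le n}$ with $q_{ij}\in\mathbb C^\times$ roots of unity, $q_{ii}=1$, $q_{ij}=q_{ji}^{-1}$. The rational quantum torus $\mathbb C_q$ is generated by $t_1^{\pm1},\dots,t_n^{\pm1}$ with $t_it_i^{-1}=t_i^{-1}t_i=1$, $t_it_j=q_{ij}t_jt_i$; $t^a=t_1^{a_1}\cdots t_n^{a_n}$, $t^at^b=f(a,b)t^bt^a$ with $f(a,b)=\prod_{i,j}q_{ji}^{a_jb_i}$, $\operatorname{rad}f=\{a: f(a,b)=1\ \forall b\}$; $Z(\mathbb C_q)$ is spanned by $t^a$, $a\in\operatorname{rad}f$. $\tau(d,q)=\mathfrak{sl}_d(\mathbb C_q)$: $d\times d$ matrices over $\mathbb C_q$ with trace in $[\mathbb C_q,\mathbb C_q]$, commutator bracket. With $J\subset\mathbb C_q\otimes\mathbb C_q$ spanned by $x\otimes y+y\otimes x$, $xy\otimes z+yz\otimes x+zx\otimes y$, let $\langle t^a,t^b\rangle$ ($a+b\in\operatorname{rad}f$) be the image of $t^a\otimes t^b$ modulo $J$, $HC_1(\mathbb C_q)$ their span; $\tilde\tau(d,q)=\tau(d,q)\oplus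 HC_1(\mathbb C_q)$ with $HC_1$ central and $[X\otimes t^a,Y\otimes t^b]=(XY\otimes t^at^b-YX\otimes t^bt^a)+\mathrm{Tr}(XY)\langle t^a,t^b\rangle$ if $a+b\in\operatorname{rad}f$ (no last term otherwise); $\hat\tau(d,q)=\tilde\tau(d,q)\oplus D$, $D=\bigoplus_i\mathbb Cd_i$, $[d_i,d_j]=0$, $[d_i,X\otimes t^a]=a_iX\otimes t^a$, $[d_i,\langle t^a,t^b\rangle]=(a_i+b_i)\langle t^a,t^b\rangle$. $\dot{\mathfrak h}$ = trace-zero diagonal matrices. Integrable: direct sum of weight spaces for $\mathfrak h=\dot{\mathfrak h}\oplus\bigoplus\mathbb C\langle t_i,t_i^{-1}\rangle\oplus\bigoplus\mathbb Cd_i$ and each $x_\alpha\otimes t^m$ ($x_\alpha$ a root vector of $\mathfrak{sl}_d(\mathbb C)$) acts locally nilpotently. Setup: $V$ is an irreducible integrable $\hat\tau(d,q)$-module with finite-dimensional weight spaces on which $HC_1(\mathbb C_q)$ acts trivially, regarded as a module over $(\mathfrak{gl}_d(\mathbb C)\otimes\mathbb C_q)\oplus D$ via $\mathfrak{gl}_d(\mathbb C)\otimes\mathbb C_q=\mathfrak{sl}_d(\mathbb C_q)\oplus(I_d\otimes Z(\mathbb C_q))$ with $I_d\otimes Z(\mathbb C_q)$ acting by zero. $N^+$ = strictly upper triangular matrices. *)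

theory Defs
  imports Complex_Main
begin

text \<open>Exponent vectors a in Z^n are functions nat => int vanishing outside {0..<n}
  (index i stands for t_(i+1)). An element of C_q is a finitely supported coefficient
  function on such exponents: x = sum_a x(a) t^a.\<close>

type_synonym lat = "nat \<Rightarrow> int"
type_synonym qt = "lat \<Rightarrow> complex"

definition lattice :: "nat \<Rightarrow> lat \<Rightarrow> bool" where
  "lattice n a \<longleftrightarrow> (\<forall>i. n \<le> i \<longrightarrow> a i = 0)"

definition qt_elem :: "nat \<Rightarrow> qt \<Rightarrow> bool" where
  "qt_elem n x \<longleftrightarrow> finite {a. x a \<noteq> 0} \<and> (\<forall>a. x a \<noteq> 0 \<longrightarrow> lattice n a)"

definition qparam :: "nat \<Rightarrow> (nat \<Rightarrow> nat \<Rightarrow> complex) \<Rightarrow> bool" where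
  "qparam n q \<longleftrightarrow> (\<forall>i<n. \<forall>j<n. (\<exists>k::nat. 0 < k \<and> q i j ^ k = 1)
      \<and> q i i = 1 \<and> q i j = inverse (q j i))"

text \<open>t^a t^b = sigma(a,b) t^(a+b), obtained by moving t_i^(b_i) to the left past
  t_j^(a_j) for j > i, using t_j t_i = q_ji t_i t_j.\<close>
definition sigma :: "nat \<Rightarrow> (nat \<Rightarrow> nat \<Rightarrow> complex) \<Rightarrow> lat \<Rightarrow> lat \<Rightarrow> complex" where
  "sigma n q a b = (\<Prod>i<n. \<Prod>j<n. if i < j then q j i powi (a j * b i) else 1)"

text \<open>f(a,b) with t^a t^b = f(a,b) t^b t^a.\<close>
definition fq :: "nat \<Rightarrow> (nat \<Rightarrow> nat \<Rightarrow> complex) \<Rightarrow> lat \<Rightarrow> lat \<Rightarrow> complex" where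
  "fq n q a b = (\<Prod>i<n. \<Prod>j<n. q j i powi (a j * b i))"

definition rad :: "nat \<Rightarrow> (nat \<Rightarrow> nat \<Rightarrow> complex) \<Rightarrow> lat set" where
  "rad n q = {a. lattice n a \<and> (\<forall>b. lattice n b \<longrightarrow> fq n q a b = 1)}"

definition qmult :: "nat \<Rightarrow> (nat \<Rightarrow> nat \<Rightarrow> complex) \<Rightarrow> qt \<Rightarrow> qt \<Rightarrow> qt" where
  "qmult n q x y = (\<lambda>c. \<Sum>a\<in>{a. x a \<noteq> 0}. x a * y (\<lambda>i. c i - a i) * sigma n q a (\<lambda>i. c i - a i))"

inductive_set comm_span :: "nat \<Rightarrow> (nat \<Rightarrow> nat \<Rightarrow> complex) \<Rightarrow> qt set"
  for n q where
  zero: "(\<lambda>_. 0) \<in> comm_span n q"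
| step: "u \<in> comm_span n q \<Longrightarrow> qt_elem n x \<Longrightarrow> qt_elem n y \<Longrightarrow>
     (\<lambda>a. u a + c * (qmult n q x y a - qmult n q y x a)) \<in> comm_span n q"

type_synonym qmat = "nat \<Rightarrow> nat \<Rightarrow> qt"

definition qmat_elem :: "nat \<Rightarrow> nat \<Rightarrow> qmat \<Rightarrow> bool" where
  "qmat_elem n d X \<longleftrightarrow> (\<forall>i j. (i < d \<and> j < d \<longrightarrow> qt_elem n (X i j))
                          \<and> (\<not> (i < d \<and> j < d) \<longrightarrow> X i j = (\<lambda>_. 0)))"

definition mmul :: "nat \<Rightarrow> (nat \<Rightarrow> nat \<Rightarrow> complex) \<Rightarrow> nat \<Rightarrow> qmat \<Rightarrow> qmat \<Rightarrow> qmat" where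
  "mmul n q d X Y = (\<lambda>i j c. \<Sum>k<d. qmult n q (X i k) (Y k j) c)"

definition mbr :: "nat \<Rightarrow> (nat \<Rightarrow> nat \<Rightarrow> complex) \<Rightarrow> nat \<Rightarrow> qmat \<Rightarrow> qmat \<Rightarrow> qmat" where
  "mbr n q d X Y = (\<lambda>i j c. mmul n q d X Y i j c - mmul n q d Y X i j c)"

definition madd :: "qmat \<Rightarrow> qmat \<Rightarrow> qmat" where
  "madd X Y = (\<lambda>i j c. X i j c + Y i j c)"

definition msc :: "complex \<Rightarrow> qmat \<Rightarrow> qmat" where
  "msc z X = (\<lambda>i j c. z * X i j c)"

definition mtrace :: "nat \<Rightarrow> qmat \<Rightarrow> qt" where
  "mtrace d X = (\<lambda>c. \<Sum>i<d. X i i c)"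

definition sl_q :: "nat \<Rightarrow> (nat \<Rightarrow> nat \<Rightarrow> complex) \<Rightarrow> nat \<Rightarrow> qmat set" where
  "sl_q n q d = {X. qmat_elem n d X \<and> mtrace d X \<in> comm_span n q}"

text \<open>Action of the degree derivation d_i on C_q-coefficients: t^a |-> a_i t^a.\<close>
definition mdeg :: "nat \<Rightarrow> qmat \<Rightarrow> qmat" where
  "mdeg i X = (\<lambda>r s c. of_int (c i) * X r s c)"

definition tens :: "(nat \<Rightarrow> nat \<Rightarrow> complex) \<Rightarrow> lat \<Rightarrow> qmat" where
  "tens X a = (\<lambda>i j c. if c = a then X i j else 0)"

text \<open>Elementary matrix E_ij (root vectors of sl_d(C) are multiples of E_ij, i ~= j).\<close>
definition Emat :: "nat \<Rightarrow> nat \<Rightarrow> nat \<Rightarrow> nat \<Rightarrow> complex" where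
  "Emat i j = (\<lambda>r s. if r = i \<and> s = j then 1 else 0)"

definition hdot :: "nat \<Rightarrow> (nat \<Rightarrow> nat \<Rightarrow> complex) \<Rightarrow> bool" where
  "hdot d h \<longleftrightarrow> (\<forall>i j. i \<noteq> j \<or> \<not> i < d \<longrightarrow> h i j = 0) \<and> (\<Sum>i<d. h i i) = 0"

definition Nplus_q :: "nat \<Rightarrow> nat \<Rightarrow> qmat set" where
  "Nplus_q n d = {X. qmat_elem n d X \<and> (\<forall>i j. j \<le> i \<longrightarrow> X i j = (\<lambda>_. 0))}"

text \<open>A module over hat-tau(d,q) on which HC_1 acts trivially is the same as a module over
  sl_d(C_q) + D with bracket [X,Y] = XY - YX (no central term) and [d_i, X] = deg_i X.
  rho gives the action of sl_d(C_q) (values outside sl_d(C_q) are irrelevant),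
  dl i gives the action of d_(i+1), sc is the complex scalar multiplication on V.\<close>
definition is_module ::
  "nat \<Rightarrow> (nat \<Rightarrow> nat \<Rightarrow> complex) \<Rightarrow> nat \<Rightarrow> (complex \<Rightarrow> 'v::ab_group_add \<Rightarrow> 'v)
   \<Rightarrow> (qmat \<Rightarrow> 'v \<Rightarrow> 'v) \<Rightarrow> (nat \<Rightarrow> 'v \<Rightarrow> 'v) \<Rightarrow> bool" where
  "is_module n q d sc rho dl \<longleftrightarrow>
     vector_space sc
   \<and> (\<forall>X\<in>sl_q n q d. Vector_Spaces.linear sc sc (rho X))
   \<and> (\<forall>i<n. Vector_Spaces.linear sc sc (dl i))
   \<and> (\<forall>X\<in>sl_q n q d. \<forall>Y\<in>sl_q n q d. \<forall>v. rho (madd X Y) v = rho X v + rho Y v)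
   \<and> (\<forall>X\<in>sl_q n q d. \<forall>z v. rho (msc z X) v = sc z (rho X v))
   \<and> (\<forall>X\<in>sl_q n q d. \<forall>Y\<in>sl_q n q d. \<forall>v.
        rho (mbr n q d X Y) v = rho X (rho Y v) - rho Y (rho X v))
   \<and> (\<forall>i<n. \<forall>j<n. \<forall>v. dl i (dl j v) = dl j (dl i v))
   \<and> (\<forall>i<n. \<forall>X\<in>sl_q n q d. \<forall>v. dl i (rho X v) - rho X (dl i v) = rho (mdeg i X) v)"

definition irreducible_mod ::
  "nat \<Rightarrow> (nat \<Rightarrow> nat \<Rightarrow> complex) \<Rightarrow> nat \<Rightarrow> (complex \<Rightarrow> 'v::ab_group_add \<Rightarrow> 'v)
   \<Rightarrow> (qmat \<Rightarrow> 'v \<Rightarrow> 'v) \<Rightarrow> (nat \<Rightarrow> 'v \<Rightarrow> 'v) \<Rightarrow> bool" where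
  "irreducible_mod n q d sc rho dl \<longleftrightarrow>
     (\<exists>v::'v. v \<noteq> 0)
   \<and> (\<forall>W. module.subspace sc W
          \<and> (\<forall>X\<in>sl_q n q d. \<forall>w\<in>W. rho X w \<in> W)
          \<and> (\<forall>i<n. \<forall>w\<in>W. dl i w \<in> W)
          \<longrightarrow> W = {0} \<or> W = UNIV)"

text \<open>Weight space for the weight (lam on dot-h, mu_i on d_i); the central elements
  <t_i, t_i^-1> act by zero since HC_1 acts trivially.\<close>
definition wspace ::
  "nat \<Rightarrow> nat \<Rightarrow> (complex \<Rightarrow> 'v::ab_group_add \<Rightarrow> 'v) \<Rightarrow> (qmat \<Rightarrow> 'v \<Rightarrow> 'v) \<Rightarrow> (nat \<Rightarrow> 'v \<Rightarrow> 'v)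
   \<Rightarrow> ((nat \<Rightarrow> nat \<Rightarrow> complex) \<Rightarrow> complex) \<Rightarrow> (nat \<Rightarrow> complex) \<Rightarrow> 'v set" where
  "wspace n d sc rho dl lam mu =
     {v. (\<forall>h. hdot d h \<longrightarrow> rho (tens h (\<lambda>_. 0)) v = sc (lam h) v)
       \<and> (\<forall>i<n. dl i v = sc (mu i) v)}"

definition integrable_fd ::
  "nat \<Rightarrow> nat \<Rightarrow> (complex \<Rightarrow> 'v::ab_group_add \<Rightarrow> 'v) \<Rightarrow> (qmat \<Rightarrow> 'v \<Rightarrow> 'v) \<Rightarrow> (nat \<Rightarrow> 'v \<Rightarrow> 'v) \<Rightarrow> bool" where
  "integrable_fd n d sc rho dl \<longleftrightarrow>
     \<comment> \<open>V is the (automatically direct) sum of its weight spaces\<close>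
     (\<forall>v. v \<in> module.span sc (\<Union>{wspace n d sc rho dl lam mu | lam mu. True}))
     \<comment> \<open>weight spaces are finite-dimensional\<close>
   \<and> (\<forall>lam mu. \<exists>B. finite B \<and> wspace n d sc rho dl lam mu \<subseteq> module.span sc B)
     \<comment> \<open>x_alpha tensor t^m acts locally nilpotently\<close>
   \<and> (\<forall>i j m v. i < d \<and> j < d \<and> i \<noteq> j \<and> lattice n m \<longrightarrow>
        (\<exists>k. (rho (tens (Emat i j) m) ^^ k) v = 0))"

definition Vplus ::
  "nat \<Rightarrow> nat \<Rightarrow> (qmat \<Rightarrow> 'v::ab_group_add \<Rightarrow> 'v) \<Rightarrow> 'v set" where
  "Vplus n d rho = {v. \<forall>X\<in>Nplus_q n d. rho X v = 0}"

end

theory Submission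
  imports Defs
begin


definition qmono :: "complex \<Rightarrow> lat \<Rightarrow> qt" where
  "qmono \<alpha> b = (\<lambda>c. if c = b then \<alpha> else 0)"

lemma qmult_qmono_left:
  "qmult n q (qmono \<alpha> b) y c = \<alpha> * y (\<lambda>i. c i - b i) * sigma n q b (\<lambda>i. c i - b i)"
proof (cases "\<alpha> = 0")
  case True
  then have "{a. qmono \<alpha> b a \<noteq> 0} = {}" by (auto simp: qmono_def)
  then show ?thesis using True by (simp add: qmult_def)
next
  case False
  then have "{a. qmono \<alpha> b a \<noteq> 0} = {b}" by (auto simp: qmono_def)
  then show ?thesis by (simp add: qmult_def qmono_def)
qed

lemma diff_eq_iff_lat: "((\<lambda>i. c i - a i) = (b::lat)) \<longleftrightarrow> (a = (\<lambda>i. c i - b i))"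
  by (auto simp: fun_eq_iff) (metis add_diff_cancel_left' diff_add_cancel)

lemma qmult_qmono_right:
  assumes "finite {a. y a \<noteq> 0}"
  shows "qmult n q y (qmono \<alpha> b) c = y (\<lambda>i. c i - b i) * \<alpha> * sigma n q (\<lambda>i. c i - b i) b"
proof -
  have "qmult n q y (qmono \<alpha> b) c = (\<Sum>a\<in>{a. y a \<noteq> 0}. if a = (\<lambda>i. c i - b i) then y a * \<alpha> * sigma n q a b else 0)"
    unfolding qmult_def qmono_def
    by (rule sum.cong) (auto simp: diff_eq_iff_lat)
  also have "\<dots> = (if (\<lambda>i. c i - b i) \<in> {a. y a \<noteq> 0} then y (\<lambda>i. c i - b i) * \<alpha> * sigma n q (\<lambda>i. c i - b i) b else 0)"
    by (rule sum.delta[OF assms])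
  also have "\<dots> = y (\<lambda>i. c i - b i) * \<alpha> * sigma n q (\<lambda>i. c i - b i) b" by auto
  finally show ?thesis .
qed

lemma qmult_zero_left[simp]: "qmult n q (\<lambda>_. 0) y = (\<lambda>_. 0)"
  by (simp add: qmult_def)

lemma qmult_zero_right[simp]: "qmult n q x (\<lambda>_. 0) = (\<lambda>_. 0)"
  by (simp add: qmult_def)

lemma sigma_zero_left[simp]: "sigma n q (\<lambda>_. 0) b = 1"
  unfolding sigma_def by (intro prod.neutral ballI) auto
lemma sigma_zero_right[simp]: "sigma n q a (\<lambda>_. 0) = 1"
  unfolding sigma_def by (intro prod.neutral ballI) auto

lemma qmult_qmono0_left: "qmult n q (qmono \<alpha> (\<lambda>_. 0)) y = (\<lambda>c. \<alpha> * y c)"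
  by (rule ext) (simp add: qmult_qmono_left)

lemma qmult_qmono0_right: "finite {a. y a \<noteq> 0} \<Longrightarrow> qmult n q y (qmono \<alpha> (\<lambda>_. 0)) = (\<lambda>c. \<alpha> * y c)"
  by (rule ext) (simp add: qmult_qmono_right)

lemma qt_elem_zero[simp]: "qt_elem n (\<lambda>_. 0)"
  by (simp add: qt_elem_def)

lemma lattice_zero[simp]: "lattice n (\<lambda>_. 0)"
  by (simp add: lattice_def)

lemma qt_elem_mono: "lattice n b \<Longrightarrow> qt_elem n (qmono \<alpha> b)"
proof -
  assume "lattice n b"
  moreover have "{a. qmono \<alpha> b a \<noteq> 0} \<subseteq> {b}" by (auto simp: qmono_def)
  ultimately show ?thesis unfolding qt_elem_def by (auto simp: qmono_def intro: finite_subset)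
qed

lemma qt_elem_add: "qt_elem n x \<Longrightarrow> qt_elem n y \<Longrightarrow> qt_elem n (\<lambda>c. x c + y c)"
proof -
  assume a: "qt_elem n x" "qt_elem n y"
  have "{c. x c + y c \<noteq> 0} \<subseteq> {c. x c \<noteq> 0} \<union> {c. y c \<noteq> 0}" by auto
  then show ?thesis using a unfolding qt_elem_def by (auto intro: finite_subset)
qed

lemma qt_elem_diff: "qt_elem n x \<Longrightarrow> qt_elem n y \<Longrightarrow> qt_elem n (\<lambda>c. x c - y c)"
proof -
  assume a: "qt_elem n x" "qt_elem n y"
  have "{c. x c - y c \<noteq> 0} \<subseteq> {c. x c \<noteq> 0} \<union> {c. y c \<noteq> 0}" by auto
  then show ?thesis using a unfolding qt_elem_def by (auto intro: finite_subset)
qed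

lemma qt_elem_scale: "qt_elem n x \<Longrightarrow> qt_elem n (\<lambda>c. z * x c)"
proof -
  assume a: "qt_elem n x"
  have "{c. z * x c \<noteq> 0} \<subseteq> {c. x c \<noteq> 0}" by auto
  then show ?thesis using a unfolding qt_elem_def by (auto intro: finite_subset)
qed

lemma qt_elem_deg: "qt_elem n x \<Longrightarrow> qt_elem n (\<lambda>c. of_int (c i) * x c)"
proof -
  assume a: "qt_elem n x"
  have "{c. of_int (c i) * x c \<noteq> (0::complex)} \<subseteq> {c. x c \<noteq> 0}" by auto
  then show ?thesis using a unfolding qt_elem_def by (auto intro: finite_subset)
qed

lemma qt_elem_mult: "qt_elem n x \<Longrightarrow> qt_elem n y \<Longrightarrow> qt_elem n (qmult n q x y)"
proof -
  assume a: "qt_elem n x" "qt_elem n y"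
  let ?X = "{a. x a \<noteq> 0}" and ?Y = "{a. y a \<noteq> 0}"
  have key: "\<exists>a. x a \<noteq> 0 \<and> y (\<lambda>i. c i - a i) \<noteq> 0" if "qmult n q x y c \<noteq> 0" for c
  proof (rule ccontr)
    assume "\<not> ?thesis"
    then have "qmult n q x y c = 0" unfolding qmult_def by (intro sum.neutral) auto
    then show False using that by simp
  qed
  have "{c. qmult n q x y c \<noteq> 0} \<subseteq> (\<lambda>(a, b). (\<lambda>i. a i + b i)) ` (?X \<times> ?Y)"
  proof
    fix c assume "c \<in> {c. qmult n q x y c \<noteq> 0}"
    then obtain a where "x a \<noteq> 0" "y (\<lambda>i. c i - a i) \<noteq> 0" using key by blast
    then show "c \<in> (\<lambda>(a, b). (\<lambda>i. a i + b i)) ` (?X \<times> ?Y)"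
      by (intro image_eqI[of _ _ "(a, \<lambda>i. c i - a i)"]) auto
  qed
  moreover have "finite ((\<lambda>(a, b). (\<lambda>i. a i + b i)) ` (?X \<times> ?Y))"
    using a unfolding qt_elem_def by auto
  moreover have "lattice n c" if nz: "qmult n q x y c \<noteq> 0" for c
  proof -
    obtain a where h: "x a \<noteq> 0" "y (\<lambda>i. c i - a i) \<noteq> 0" using key nz by blast
    then have "lattice n a" "lattice n (\<lambda>i. c i - a i)" using a unfolding qt_elem_def by auto
    then show ?thesis unfolding lattice_def by auto
  qed
  ultimately show ?thesis unfolding qt_elem_def by (auto intro: finite_subset)
qed

lemma qt_elem_sum: "finite A \<Longrightarrow> (\<And>k. k \<in> A \<Longrightarrow> qt_elem n (f k)) \<Longrightarrow> qt_elem n (\<lambda>c. \<Sum>k\<in>A. f k c)"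
proof (induction A rule: finite_induct)
  case empty then show ?case by simp
next
  case (insert k A)
  then show ?case by (simp add: qt_elem_add)
qed




lemma qparam_nz: "qparam n q \<Longrightarrow> i < n \<Longrightarrow> j < n \<Longrightarrow> q i j \<noteq> 0"
  proof
  assume "qparam n q" "i < n" "j < n" "q i j = 0"
  then obtain k :: nat where "0 < k" "q i j ^ k = 1" unfolding qparam_def by blast
  then show False using \<open>q i j = 0\<close> by (simp add: zero_power)
qed

lemma sigma_swap:
  assumes qp: "qparam n q"
  shows "sigma n q a b = fq n q a b * sigma n q b a"
proof -
  define g where "g i j = q j i powi (a j * b i)" for i j
  define A where "A = (\<Prod>i<n. \<Prod>j<n. if i < j then g i j else 1)"
  define B where "B = (\<Prod>i<n. \<Prod>j<n. if j < i then g i j else 1)"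
  have sA: "sigma n q a b = A" unfolding A_def g_def sigma_def ..
  have "fq n q a b = (\<Prod>i<n. \<Prod>j<n. (if i < j then g i j else 1) * (if j < i then g i j else 1))"
    unfolding fq_def g_def
  proof (intro prod.cong refl)
    fix i j assume "i \<in> {..<n}" "j \<in> {..<n}"
    then have "q i i = 1" using qp unfolding qparam_def by blast
    then show "q j i powi (a j * b i) = (if i < j then q j i powi (a j * b i) else 1) * (if j < i then q j i powi (a j * b i) else 1)"
      by (cases "i < j"; cases "j < i") auto
  qed
  also have "\<dots> = A * B" unfolding A_def B_def by (simp only: prod.distrib)
  finally have fA: "fq n q a b = A * B" .
  have "sigma n q b a = (\<Prod>j<n. \<Prod>i<n. if i < j then q j i powi (b j * a i) else 1)"
    unfolding sigma_def by (rule prod.swap)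
  also have "\<dots> = (\<Prod>i<n. \<Prod>j<n. if j < i then inverse (g i j) else 1)"
  proof (intro prod.cong refl)
    fix i j assume "i \<in> {..<n}" "j \<in> {..<n}"
    then have "q i j = inverse (q j i)" using qp unfolding qparam_def by blast
    then show "(if j < i then q i j powi (b i * a j) else 1) = (if j < i then inverse (g i j) else 1)"
      unfolding g_def by (simp add: power_int_inverse mult.commute)
  qed
  finally have sB: "sigma n q b a = (\<Prod>i<n. \<Prod>j<n. if j < i then inverse (g i j) else 1)" .
  have "B * sigma n q b a = (\<Prod>i<n. \<Prod>j<n. (if j < i then g i j else 1) * (if j < i then inverse (g i j) else 1))"
    unfolding B_def sB by (simp only: prod.distrib)
  also have "\<dots> = 1"
  proof (intro prod.neutral ballI)
    fix i j assume "i \<in> {..<n}" "j \<in> {..<n}"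
    then have "g i j \<noteq> 0" unfolding g_def using qparam_nz[OF qp] by auto
    then show "(if j < i then g i j else 1) * (if j < i then inverse (g i j) else 1) = 1" by auto
  qed
  finally have "B * sigma n q b a = 1" .
  then show ?thesis using sA fA by (metis mult.assoc mult.right_neutral)
qed

lemma qmult_central:
  assumes qp: "qparam n q" and ar: "a \<in> rad n q" and y: "qt_elem n y"
  shows "qmult n q (qmono \<alpha> a) y = qmult n q y (qmono \<alpha> a)"
proof (rule ext)
  fix c
  have fin: "finite {a. y a \<noteq> 0}" using y unfolding qt_elem_def by auto
  show "qmult n q (qmono \<alpha> a) y c = qmult n q y (qmono \<alpha> a) c"
  proof (cases "y (\<lambda>i. c i - a i) = 0")
    case True then show ?thesis by (simp add: qmult_qmono_left qmult_qmono_right[OF fin])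
  next
    case False
    then have "lattice n (\<lambda>i. c i - a i)" using y unfolding qt_elem_def by auto
    then have "fq n q a (\<lambda>i. c i - a i) = 1" using ar unfolding rad_def by auto
    then have "sigma n q a (\<lambda>i. c i - a i) = sigma n q (\<lambda>i. c i - a i) a"
      using sigma_swap[OF qp, of a "\<lambda>i. c i - a i"] by simp
    then show ?thesis by (simp add: qmult_qmono_left qmult_qmono_right[OF fin])
  qed
qed




definition sgl :: "nat \<Rightarrow> nat \<Rightarrow> qt \<Rightarrow> qmat" where
  "sgl i j y = (\<lambda>r s. if r = i \<and> s = j then y else (\<lambda>_. 0))"

definition isdiag :: "qmat \<Rightarrow> bool" where
  "isdiag D \<longleftrightarrow> (\<forall>r s. r \<noteq> s \<longrightarrow> D r s = (\<lambda>_. 0))"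

definition zmat :: qmat where "zmat = (\<lambda>r s. (\<lambda>_. 0))"

lemma qmat_elem_zero_out: "qmat_elem n d X \<Longrightarrow> \<not> (r < d \<and> s < d) \<Longrightarrow> X r s = (\<lambda>_. 0)"
  unfolding qmat_elem_def by blast

lemma qmat_elem_qt: "qmat_elem n d X \<Longrightarrow> qt_elem n (X r s)"
  unfolding qmat_elem_def by (metis qt_elem_zero)

lemma qt_fin: "qt_elem n x \<Longrightarrow> finite {a. x a \<noteq> 0}"
  unfolding qt_elem_def by blast

lemma mmul_sgl_right:
  assumes "i < d"
  shows "mmul n q d A (sgl i j y) r s c = (if s = j then qmult n q (A r i) y c else 0)"
proof -
  have "mmul n q d A (sgl i j y) r s c = (\<Sum>k<d. if k = i then (if s = j then qmult n q (A r i) y c else 0) else 0)"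
    unfolding mmul_def sgl_def by (intro sum.cong) auto
  also have "\<dots> = (if s = j then qmult n q (A r i) y c else 0)" using assms by simp
  finally show ?thesis .
qed

lemma mmul_sgl_left:
  assumes "j < d"
  shows "mmul n q d (sgl i j y) A r s c = (if r = i then qmult n q y (A j s) c else 0)"
proof -
  have "mmul n q d (sgl i j y) A r s c = (\<Sum>k<d. if k = j then (if r = i then qmult n q y (A j s) c else 0) else 0)"
    unfolding mmul_def sgl_def by (intro sum.cong) auto
  also have "\<dots> = (if r = i then qmult n q y (A j s) c else 0)" using assms by simp
  finally show ?thesis .
qed

lemma mmul_diag_left:
  assumes "isdiag D" "qmat_elem n d D"
  shows "mmul n q d D B r s c = qmult n q (D r r) (B r s) c"
proof -
  have "mmul n q d D B r s c = (\<Sum>k<d. if k = r then qmult n q (D r r) (B r s) c else 0)"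
    unfolding mmul_def using assms(1) unfolding isdiag_def by (intro sum.cong) auto
  also have "\<dots> = qmult n q (D r r) (B r s) c"
    using qmat_elem_zero_out[OF assms(2), of r r] by simp
  finally show ?thesis .
qed

lemma mmul_diag_right:
  assumes "isdiag D" "qmat_elem n d D"
  shows "mmul n q d B D r s c = qmult n q (B r s) (D s s) c"
proof -
  have "mmul n q d B D r s c = (\<Sum>k<d. if k = s then qmult n q (B r s) (D s s) c else 0)"
    unfolding mmul_def using assms(1) unfolding isdiag_def by (intro sum.cong) auto
  also have "\<dots> = qmult n q (B r s) (D s s) c"
    using qmat_elem_zero_out[OF assms(2), of s s] by simp
  finally show ?thesis .
qed

lemma mbr_diag:
  assumes "isdiag D" "qmat_elem n d D"
  shows "mbr n q d D B r s c = qmult n q (D r r) (B r s) c - qmult n q (B r s) (D s s) c"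
  unfolding mbr_def using mmul_diag_left[OF assms] mmul_diag_right[OF assms] by simp

lemma mbr_sgl:
  assumes "i < d" "j < d"
  shows "mbr n q d A (sgl i j y) r s c =
     (if s = j then qmult n q (A r i) y c else 0) - (if r = i then qmult n q y (A j s) c else 0)"
  unfolding mbr_def using mmul_sgl_left[OF assms(2)] mmul_sgl_right[OF assms(1)] by simp

lemma qmat_elem_sgl: "i < d \<Longrightarrow> j < d \<Longrightarrow> qt_elem n y \<Longrightarrow> qmat_elem n d (sgl i j y)"
  unfolding qmat_elem_def sgl_def by auto

lemma zero_in_comm_span: "(\<lambda>_. 0) \<in> comm_span n q"
  by (rule comm_span.zero)

lemma sl_offdiag:
  assumes "qmat_elem n d X" "\<And>r. X r r = (\<lambda>_. 0)"
  shows "X \<in> sl_q n q d"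
proof -
  have "mtrace d X = (\<lambda>_. 0)" unfolding mtrace_def using assms(2) by simp
  then show ?thesis using assms(1) unfolding sl_q_def by (simp add: comm_span.zero)
qed

lemma zmat_sl: "zmat \<in> sl_q n q d"
  by (rule sl_offdiag) (auto simp: zmat_def qmat_elem_def)

lemma sgl_sl: "i < d \<Longrightarrow> j < d \<Longrightarrow> i \<noteq> j \<Longrightarrow> qt_elem n y \<Longrightarrow> sgl i j y \<in> sl_q n q d"
proof (rule sl_offdiag)
  assume "i < d" "j < d" "i \<noteq> j" "qt_elem n y"
  then show "qmat_elem n d (sgl i j y)" by (intro qmat_elem_sgl) auto
  show "sgl i j y r r = (\<lambda>_. 0)" for r using \<open>i \<noteq> j\<close> unfolding sgl_def by auto
qed

lemma Nplus_sl: "U \<in> Nplus_q n d \<Longrightarrow> U \<in> sl_q n q d"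
  unfolding Nplus_q_def by (auto intro!: sl_offdiag)

lemma mmul_zero_out:
  assumes A: "qmat_elem n d A" and B: "qmat_elem n d B" and ij: "\<not> (i < d \<and> j < d)"
  shows "mmul n q d A B i j = (\<lambda>_. 0)"
proof (cases "i < d")
  case True
  then have "j \<ge> d" using ij by auto
  then have "B k j = (\<lambda>_. 0)" for k using qmat_elem_zero_out[OF B] by auto
  then show ?thesis unfolding mmul_def by simp
next
  case False
  then have "A i k = (\<lambda>_. 0)" for k using qmat_elem_zero_out[OF A] by auto
  then show ?thesis unfolding mmul_def by simp
qed

lemma qmat_elem_mbr:
  assumes A: "qmat_elem n d A" and B: "qmat_elem n d B"
  shows "qmat_elem n d (mbr n q d A B)"
  unfolding qmat_elem_def
proof (intro allI conjI impI)
  fix i j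
  show "qt_elem n (mbr n q d A B i j)"
    unfolding mbr_def mmul_def
    by (intro qt_elem_diff qt_elem_sum qt_elem_mult qmat_elem_qt[OF A] qmat_elem_qt[OF B]) auto
  assume "\<not> (i < d \<and> j < d)"
  then show "mbr n q d A B i j = (\<lambda>_. 0)"
    unfolding mbr_def using mmul_zero_out[OF A B] mmul_zero_out[OF B A] by simp
qed

lemma mbr_sgl_sl:
  assumes A: "qmat_elem n d A" and ij: "i < d" "j < d" and y: "qt_elem n y"
  shows "mbr n q d A (sgl i j y) \<in> sl_q n q d"
proof -
  have tr: "mtrace d (mbr n q d A (sgl i j y)) = (\<lambda>c. 0 + 1 * (qmult n q (A j i) y c - qmult n q y (A j i) c))"
  proof (rule ext)
    fix c
    have "mtrace d (mbr n q d A (sgl i j y)) c = (\<Sum>r<d. (if r = j then qmult n q (A r i) y c else 0) - (if r = i then qmult n q y (A j r) c else 0))"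
      unfolding mtrace_def using mbr_sgl[OF ij] by simp
    also have "\<dots> = (\<Sum>r<d. if r = j then qmult n q (A r i) y c else 0) - (\<Sum>r<d. if r = i then qmult n q y (A j r) c else 0)"
      by (rule sum_subtractf)
    also have "\<dots> = qmult n q (A j i) y c - qmult n q y (A j i) c" using ij by simp
    finally show "mtrace d (mbr n q d A (sgl i j y)) c = 0 + 1 * (qmult n q (A j i) y c - qmult n q y (A j i) c)" by simp
  qed
  have "mtrace d (mbr n q d A (sgl i j y)) \<in> comm_span n q"
    unfolding tr by (rule comm_span.step[OF comm_span.zero qmat_elem_qt[OF A] y])
  moreover have "qmat_elem n d (mbr n q d A (sgl i j y))"
    by (rule qmat_elem_mbr[OF A qmat_elem_sgl[OF ij y]])
  ultimately show ?thesis unfolding sl_q_def by simp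
qed

lemma tens_mono: "tens X a i j = qmono (X i j) a"
  unfolding tens_def qmono_def by auto

lemma hdot_tens_qmat: "hdot d h \<Longrightarrow> lattice n a \<Longrightarrow> qmat_elem n d (tens h a)"
proof -
  assume h: "hdot d h" and a: "lattice n a"
  show ?thesis unfolding qmat_elem_def tens_mono
  proof (intro allI conjI impI)
    fix i j
    show "qt_elem n (qmono (h i j) a)" using a by (rule qt_elem_mono)
    assume "\<not> (i < d \<and> j < d)"
    then have "h i j = 0" using h unfolding hdot_def by auto
    then show "qmono (h i j) a = (\<lambda>_. 0)" unfolding qmono_def by auto
  qed
qed

lemma hdot_tens_diag: "hdot d h \<Longrightarrow> isdiag (tens h a)"
  unfolding isdiag_def hdot_def tens_def by (auto simp: fun_eq_iff)

lemma hdot_tens_sl: "hdot d h \<Longrightarrow> lattice n a \<Longrightarrow> tens h a \<in> sl_q n q d"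
proof -
  assume h: "hdot d h" and a: "lattice n a"
  have "mtrace d (tens h a) = (\<lambda>c. if c = a then (\<Sum>i<d. h i i) else 0)"
    unfolding mtrace_def tens_def apply (rule ext) subgoal for c by (cases "c = a") simp_all done
  also have "\<dots> = (\<lambda>_. 0)" using h unfolding hdot_def by auto
  finally show ?thesis using hdot_tens_qmat[OF h a] unfolding sl_q_def by (simp add: comm_span.zero)
qed

section \<open>Decomposition\<close>

definition diagp :: "qmat \<Rightarrow> qmat" where
  "diagp X = (\<lambda>r s. if r = s then X r s else (\<lambda>_. 0))"
definition upp :: "qmat \<Rightarrow> qmat" where
  "upp X = (\<lambda>r s. if r < s then X r s else (\<lambda>_. 0))"
definition lows :: "(nat \<times> nat) set \<Rightarrow> qmat \<Rightarrow> qmat" where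
  "lows P X = (\<lambda>r s. if (r, s) \<in> P then X r s else (\<lambda>_. 0))"
definition lowpairs :: "nat \<Rightarrow> (nat \<times> nat) set" where
  "lowpairs d = {(i, j). j < i \<and> i < d}"

lemma finite_lowpairs: "finite (lowpairs d)"
proof -
  have "lowpairs d \<subseteq> {..<d} \<times> {..<d}" unfolding lowpairs_def by auto
  then show ?thesis by (rule finite_subset) auto
qed

lemma decomp: "qmat_elem n d X \<Longrightarrow> X = madd (madd (lows (lowpairs d) X) (diagp X)) (upp X)"
proof (intro ext)
  fix r s c assume X: "qmat_elem n d X"
  show "X r s c = madd (madd (lows (lowpairs d) X) (diagp X)) (upp X) r s c"
  proof (cases "r < d \<and> s < d")
    case True
    then show ?thesis unfolding madd_def lows_def diagp_def upp_def lowpairs_def by auto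
  next
    case False
    then have "X r s = (\<lambda>_. 0)" by (rule qmat_elem_zero_out[OF X])
    then show ?thesis unfolding madd_def lows_def diagp_def upp_def lowpairs_def by auto
  qed
qed

lemma diagp_sl: "X \<in> sl_q n q d \<Longrightarrow> diagp X \<in> sl_q n q d"
proof -
  assume X: "X \<in> sl_q n q d"
  have "mtrace d (diagp X) = mtrace d X" unfolding mtrace_def diagp_def by simp
  moreover have "qmat_elem n d (diagp X)" using X unfolding sl_q_def qmat_elem_def diagp_def by auto
  ultimately show ?thesis using X unfolding sl_q_def by simp
qed

lemma diagp_diag: "isdiag (diagp X)"
  unfolding isdiag_def diagp_def by auto

lemma upp_Nplus: "qmat_elem n d X \<Longrightarrow> upp X \<in> Nplus_q n d"
  unfolding Nplus_q_def qmat_elem_def upp_def by auto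

lemma lows_qmat: "P \<subseteq> lowpairs d \<Longrightarrow> qmat_elem n d X \<Longrightarrow> qmat_elem n d (lows P X)"
proof -
  assume P: "P \<subseteq> lowpairs d" and X: "qmat_elem n d X"
  show ?thesis unfolding qmat_elem_def
  proof (intro allI conjI impI)
    fix i j
    show "qt_elem n (lows P X i j)" unfolding lows_def using qmat_elem_qt[OF X] by auto
    assume "\<not> (i < d \<and> j < d)"
    then have "(i, j) \<notin> P" using P unfolding lowpairs_def by auto
    then show "lows P X i j = (\<lambda>_. 0)" unfolding lows_def by simp
  qed
qed

lemma lows_sl: "P \<subseteq> lowpairs d \<Longrightarrow> qmat_elem n d X \<Longrightarrow> lows P X \<in> sl_q n q d"
proof (rule sl_offdiag)
  assume P: "P \<subseteq> lowpairs d" and X: "qmat_elem n d X"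
  show "qmat_elem n d (lows P X)" using P X by (rule lows_qmat)
  show "lows P X r r = (\<lambda>_. 0)" for r using P unfolding lows_def lowpairs_def by auto
qed

lemma lows_empty: "lows {} X = zmat"
  unfolding lows_def zmat_def by auto

lemma lows_insert: "lows (insert p P) X = madd (sgl (fst p) (snd p) (X (fst p) (snd p))) (lows P X)"
  if "p \<notin> P"
  using that unfolding lows_def madd_def sgl_def by (auto simp: fun_eq_iff)

lemma mbr_diag_upp:
  assumes "isdiag D" "qmat_elem n d D" "U \<in> Nplus_q n d"
  shows "mbr n q d D U \<in> Nplus_q n d"
proof -
  have "qmat_elem n d U" using assms(3) unfolding Nplus_q_def by auto
  then have "qmat_elem n d (mbr n q d D U)" using qmat_elem_mbr assms(2) by blast
  moreover have "mbr n q d D U r s = (\<lambda>_. 0)" if "s \<le> r" for r s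
  proof -
    have "U r s = (\<lambda>_. 0)" using assms(3) that unfolding Nplus_q_def by auto
    then show ?thesis by (intro ext) (simp add: mbr_diag[OF assms(1,2)])
  qed
  ultimately show ?thesis unfolding Nplus_q_def by auto
qed

lemma mbr_diag_sgl:
  assumes "isdiag D" "qmat_elem n d D"
  shows "mbr n q d D (sgl i j y) = sgl i j (\<lambda>c. qmult n q (D i i) y c - qmult n q y (D j j) c)"
  by (auto simp: fun_eq_iff mbr_diag[OF assms] sgl_def)

lemma mdeg_sgl: "mdeg k (sgl i j y) = sgl i j (\<lambda>c. of_int (c k) * y c)"
  unfolding mdeg_def sgl_def by (auto simp: fun_eq_iff)

lemma mdeg_Nplus: "U \<in> Nplus_q n d \<Longrightarrow> mdeg k U \<in> Nplus_q n d"
  unfolding Nplus_q_def qmat_elem_def mdeg_def by (auto intro: qt_elem_deg)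

lemma mdeg_tens: "mdeg k (tens X b) = msc (of_int (b k)) (tens X b)"
  unfolding mdeg_def msc_def tens_def by (auto simp: fun_eq_iff)

lemma msc_zero_zmat: "msc 0 X = zmat"
  unfolding msc_def zmat_def by auto




definition h0 :: "nat \<Rightarrow> nat \<Rightarrow> nat \<Rightarrow> complex" where
  "h0 d = (\<lambda>r s. if r = s \<and> r < d then of_nat d - 1 - 2 * of_nat r else 0)"

lemma sum_lin_aux: "(\<Sum>r<m. (c - 2 * of_nat r :: complex)) = of_nat m * c - of_nat m * (of_nat m - 1)"
  by (induction m) (auto simp: algebra_simps)

lemma hdot_h0: "hdot d (h0 d)"
proof -
  have "(\<Sum>i<d. h0 d i i) = (\<Sum>r<d. ((of_nat d - 1) - 2 * of_nat r :: complex))"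
    unfolding h0_def by simp
  also have "\<dots> = 0" by (simp add: sum_lin_aux)
  finally show ?thesis unfolding hdot_def h0_def by auto
qed

lemma h0_diff: "i < d \<Longrightarrow> j < d \<Longrightarrow> h0 d i i - h0 d j j = 2 * (of_nat j - of_nat i)"
  unfolding h0_def by (simp add: algebra_simps)

abbreviation Hm :: "nat \<Rightarrow> qmat" where "Hm d \<equiv> tens (h0 d) (\<lambda>_. 0)"

lemma Hm_sl: "Hm d \<in> sl_q n q d"
  by (rule hdot_tens_sl[OF hdot_h0]) simp

lemma Hm_qmat: "qmat_elem n d (Hm d)"
  by (rule hdot_tens_qmat[OF hdot_h0]) simp

lemma Hm_diag: "isdiag (Hm d)"
  by (rule hdot_tens_diag[OF hdot_h0])

lemma mbr_H:
  assumes B: "qmat_elem n d B"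
  shows "mbr n q d (Hm d) B r s c = (h0 d r r - h0 d s s) * B r s c"
proof -
  have fin: "finite {a. B r s a \<noteq> 0}" using qmat_elem_qt[OF B] by (rule qt_fin)
  show ?thesis
    unfolding mbr_diag[OF Hm_diag Hm_qmat] tens_mono qmult_qmono0_left qmult_qmono0_right[OF fin]
    by (simp add: algebra_simps)
qed

lemma mbr_H_sgl:
  assumes "i < d" "j < d" "qt_elem n y"
  shows "mbr n q d (Hm d) (sgl i j y) = msc (h0 d i i - h0 d j j) (sgl i j y)"
proof (intro ext)
  fix r s c
  show "mbr n q d (Hm d) (sgl i j y) r s c = msc (h0 d i i - h0 d j j) (sgl i j y) r s c"
    unfolding mbr_H[OF qmat_elem_sgl[OF assms]] by (auto simp: msc_def sgl_def)
qed

lemma mbr_H_diag: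
  assumes "isdiag B" "qmat_elem n d B"
  shows "mbr n q d (Hm d) B = zmat"
proof (intro ext)
  fix r s c
  show "mbr n q d (Hm d) B r s c = zmat r s c"
    unfolding mbr_H[OF assms(2)] using assms(1) unfolding isdiag_def zmat_def
    by (cases "r = s") auto
qed

lemma mbr_T_diag:
  assumes qp: "qparam n q" and ar: "a \<in> rad n q" and h: "hdot d h"
    and "isdiag B" "qmat_elem n d B"
  shows "mbr n q d (tens h a) B = zmat"
proof (intro ext)
  fix r s c
  have la: "lattice n a" using ar unfolding rad_def by auto
  show "mbr n q d (tens h a) B r s c = zmat r s c"
  proof (cases "r = s")
    case True
    then show ?thesis
      unfolding mbr_diag[OF hdot_tens_diag[OF h] hdot_tens_qmat[OF h la]] tens_mono zmat_def
      using qmult_central[OF qp ar qmat_elem_qt[OF assms(5)]] by simp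
  next
    case False
    then have "B r s = (\<lambda>_. 0)" using assms(4) unfolding isdiag_def by auto
    then show ?thesis
      unfolding mbr_diag[OF hdot_tens_diag[OF h] hdot_tens_qmat[OF h la]] zmat_def by simp
  qed
qed




locale mctx =
  fixes n d :: nat and q :: "nat \<Rightarrow> nat \<Rightarrow> complex"
    and sc :: "complex \<Rightarrow> 'v::ab_group_add \<Rightarrow> 'v"
    and rho :: "qmat \<Rightarrow> 'v \<Rightarrow> 'v" and dl :: "nat \<Rightarrow> 'v \<Rightarrow> 'v"
  assumes qp: "qparam n q" and modl: "is_module n q d sc rho dl"
    and irr: "irreducible_mod n q d sc rho dl" and integ: "integrable_fd n d sc rho dl"
begin

lemma vs: "vector_space sc" using modl unfolding is_module_def by blast

sublocale V: vector_space sc by (rule vs)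

lemma rho_lin: "X \<in> sl_q n q d \<Longrightarrow> Vector_Spaces.linear sc sc (rho X)"
  using modl unfolding is_module_def by blast

lemma rho_add: "X \<in> sl_q n q d \<Longrightarrow> rho X (v + w) = rho X v + rho X w"
proof -
  assume "X \<in> sl_q n q d"
  then have "\<forall>x y. rho X (x + y) = rho X x + rho X y" using rho_lin[THEN Vector_Spaces.linear_iff[THEN iffD1]] by blast
  then show ?thesis by blast
qed

lemma rho_scale: "X \<in> sl_q n q d \<Longrightarrow> rho X (sc c v) = sc c (rho X v)"
proof -
  assume "X \<in> sl_q n q d"
  then have "\<forall>c x. rho X (sc c x) = sc c (rho X x)" using rho_lin[THEN Vector_Spaces.linear_iff[THEN iffD1]] by blast
  then show ?thesis by blast
qed

lemma rho_0: "X \<in> sl_q n q d \<Longrightarrow> rho X 0 = 0"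
  using rho_scale[of X 0 0] by simp

lemma rho_diff: "X \<in> sl_q n q d \<Longrightarrow> rho X (v - w) = rho X v - rho X w"
proof -
  assume X: "X \<in> sl_q n q d"
  have "rho X (v - w) + rho X w = rho X v" using rho_add[OF X, of "v - w" w] by simp
  then show ?thesis by (simp add: eq_diff_eq)
qed

lemma rho_madd: "X \<in> sl_q n q d \<Longrightarrow> Y \<in> sl_q n q d \<Longrightarrow> rho (madd X Y) v = rho X v + rho Y v"
  using modl unfolding is_module_def by blast

lemma rho_msc: "X \<in> sl_q n q d \<Longrightarrow> rho (msc z X) v = sc z (rho X v)"
  using modl unfolding is_module_def by blast

lemma rho_comm: "X \<in> sl_q n q d \<Longrightarrow> Y \<in> sl_q n q d \<Longrightarrow>
   rho X (rho Y v) = rho Y (rho X v) + rho (mbr n q d X Y) v"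
proof -
  assume "X \<in> sl_q n q d" "Y \<in> sl_q n q d"
  then have "rho (mbr n q d X Y) v = rho X (rho Y v) - rho Y (rho X v)"
    using modl unfolding is_module_def by blast
  then show ?thesis by (simp add: eq_diff_eq add.commute)
qed

lemma dl_lin: "i < n \<Longrightarrow> Vector_Spaces.linear sc sc (dl i)"
  using modl unfolding is_module_def by blast

lemma dl_add: "i < n \<Longrightarrow> dl i (v + w) = dl i v + dl i w"
proof -
  assume "i < n"
  then have "\<forall>x y. dl i (x + y) = dl i x + dl i y" using dl_lin[THEN Vector_Spaces.linear_iff[THEN iffD1]] by blast
  then show ?thesis by blast
qed

lemma dl_scale: "i < n \<Longrightarrow> dl i (sc c v) = sc c (dl i v)"
proof -
  assume "i < n"
  then have "\<forall>c x. dl i (sc c x) = sc c (dl i x)" using dl_lin[THEN Vector_Spaces.linear_iff[THEN iffD1]] by blast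
  then show ?thesis by blast
qed

lemma dl_0: "i < n \<Longrightarrow> dl i 0 = 0"
  using dl_scale[of i 0 0] by simp

lemma dl_comm: "i < n \<Longrightarrow> X \<in> sl_q n q d \<Longrightarrow> dl i (rho X v) = rho X (dl i v) + rho (mdeg i X) v"
proof -
  assume "i < n" "X \<in> sl_q n q d"
  then have "dl i (rho X v) - rho X (dl i v) = rho (mdeg i X) v"
    using modl unfolding is_module_def by blast
  then show ?thesis by (simp add: algebra_simps)
qed

lemma rho_zmat: "rho zmat v = 0"
  using rho_msc[OF zmat_sl, of 0 v] by (simp add: msc_zero_zmat)

lemma rho_lows:
  assumes "finite P" "P \<subseteq> lowpairs d" "qmat_elem n d X"
  shows "rho (lows P X) v = (\<Sum>p\<in>P. rho (sgl (fst p) (snd p) (X (fst p) (snd p))) v)"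
  using assms(1,2)
proof (induction P rule: finite_induct)
  case empty
  then show ?case by (simp add: lows_empty rho_zmat)
next
  case (insert p P)
  have p: "snd p < fst p" "fst p < d" using insert.prems unfolding lowpairs_def by auto
  have sg: "sgl (fst p) (snd p) (X (fst p) (snd p)) \<in> sl_q n q d"
    using p by (intro sgl_sl qmat_elem_qt[OF assms(3)]) auto
  have ls: "lows P X \<in> sl_q n q d" using insert.prems assms(3) by (intro lows_sl) auto
  show ?case
    unfolding lows_insert[OF insert.hyps(2)] rho_madd[OF sg ls]
    using insert by simp
qed

definition Lw :: "qmat set" where
  "Lw = {sgl i j y | i j y. j < i \<and> i < d \<and> qt_elem n y}"

definition Dg :: "qmat set" where
  "Dg = {D. D \<in> sl_q n q d \<and> isdiag D}"

lemma Lw_sl: "Y \<in> Lw \<Longrightarrow> Y \<in> sl_q n q d"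
  unfolding Lw_def by (auto intro!: sgl_sl)

lemma Dg_sl: "D \<in> Dg \<Longrightarrow> D \<in> sl_q n q d"
  unfolding Dg_def by auto

lemma rho_decomp:
  assumes X: "X \<in> sl_q n q d"
  shows "rho X v = (\<Sum>p\<in>lowpairs d. rho (sgl (fst p) (snd p) (X (fst p) (snd p))) v)
                   + rho (diagp X) v + rho (upp X) v"
proof -
  have Xq: "qmat_elem n d X" using X unfolding sl_q_def by auto
  have l: "lows (lowpairs d) X \<in> sl_q n q d" by (rule lows_sl[OF subset_refl Xq])
  have dd: "diagp X \<in> sl_q n q d" by (rule diagp_sl[OF X])
  have u: "upp X \<in> sl_q n q d" by (rule Nplus_sl[OF upp_Nplus[OF Xq]])
  have ld: "madd (lows (lowpairs d) X) (diagp X) \<in> sl_q n q d"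
  proof -
    have "mtrace d (madd (lows (lowpairs d) X) (diagp X)) = mtrace d X"
      unfolding mtrace_def madd_def lows_def diagp_def lowpairs_def by simp
    moreover have "qmat_elem n d (madd (lows (lowpairs d) X) (diagp X))"
      using l dd unfolding sl_q_def qmat_elem_def madd_def by (auto intro: qt_elem_add)
    ultimately show ?thesis using X unfolding sl_q_def by simp
  qed
  have "rho X v = rho (madd (madd (lows (lowpairs d) X) (diagp X)) (upp X)) v"
    using decomp[OF Xq] by simp
  also have "\<dots> = rho (lows (lowpairs d) X) v + rho (diagp X) v + rho (upp X) v"
    by (simp add: rho_madd[OF ld u] rho_madd[OF l dd])
  finally show ?thesis by (simp add: rho_lows[OF finite_lowpairs subset_refl Xq])
qed

lemma sgl_low_Lw: "X \<in> sl_q n q d \<Longrightarrow> p \<in> lowpairs d \<Longrightarrow> sgl (fst p) (snd p) (X (fst p) (snd p)) \<in> Lw"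
proof -
  assume X: "X \<in> sl_q n q d" and p: "p \<in> lowpairs d"
  then have "qt_elem n (X (fst p) (snd p))" unfolding sl_q_def by (auto intro: qmat_elem_qt)
  moreover have "snd p < fst p" "fst p < d" using p unfolding lowpairs_def by auto
  ultimately show ?thesis unfolding Lw_def by blast
qed

lemma diagp_Dg: "X \<in> sl_q n q d \<Longrightarrow> diagp X \<in> Dg"
  unfolding Dg_def by (simp add: diagp_sl diagp_diag)

lemma upp_Np: "X \<in> sl_q n q d \<Longrightarrow> upp X \<in> Nplus_q n d"
  unfolding sl_q_def by (auto intro: upp_Nplus)

end




context mctx begin

lemma Np_sl: "U \<in> Nplus_q n d \<Longrightarrow> U \<in> sl_q n q d" by (rule Nplus_sl)

lemma Dg_qmat: "D \<in> Dg \<Longrightarrow> qmat_elem n d D \<and> isdiag D"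
  unfolding Dg_def sl_q_def by auto

lemma Hm_Dg: "Hm d \<in> Dg"
  unfolding Dg_def using Hm_sl Hm_diag by auto

lemma Vp_zero: "0 \<in> Vplus n d rho"
  unfolding Vplus_def using rho_0 Np_sl by auto

lemma Vp_add: "v \<in> Vplus n d rho \<Longrightarrow> w \<in> Vplus n d rho \<Longrightarrow> v + w \<in> Vplus n d rho"
  unfolding Vplus_def using rho_add Np_sl by auto

lemma Vp_scale: "v \<in> Vplus n d rho \<Longrightarrow> sc c v \<in> Vplus n d rho"
  unfolding Vplus_def using rho_scale Np_sl by auto

lemma Vp_sub: "V.subspace (Vplus n d rho)"
  unfolding V.subspace_def using Vp_zero Vp_add Vp_scale by auto

lemma Vp_diag: "D \<in> Dg \<Longrightarrow> v \<in> Vplus n d rho \<Longrightarrow> rho D v \<in> Vplus n d rho"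
proof -
  assume D: "D \<in> Dg" and v: "v \<in> Vplus n d rho"
  show ?thesis unfolding Vplus_def
  proof (intro CollectI ballI)
    fix U assume U: "U \<in> Nplus_q n d"
    have b: "mbr n q d D U \<in> Nplus_q n d" using Dg_qmat[OF D] U by (intro mbr_diag_upp) auto
    have "rho D (rho U v) = rho U (rho D v) + rho (mbr n q d D U) v"
      by (rule rho_comm[OF Dg_sl[OF D] Np_sl[OF U]])
    moreover have "rho U v = 0" using v U unfolding Vplus_def by auto
    moreover have "rho (mbr n q d D U) v = 0" using v b unfolding Vplus_def by auto
    ultimately show "rho U (rho D v) = 0" using rho_0[OF Dg_sl[OF D]] by simp
  qed
qed

lemma Vp_dl: "i < n \<Longrightarrow> v \<in> Vplus n d rho \<Longrightarrow> dl i v \<in> Vplus n d rho"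
proof -
  assume i: "i < n" and v: "v \<in> Vplus n d rho"
  show ?thesis unfolding Vplus_def
  proof (intro CollectI ballI)
    fix U assume U: "U \<in> Nplus_q n d"
    have "dl i (rho U v) = rho U (dl i v) + rho (mdeg i U) v"
      by (rule dl_comm[OF i Np_sl[OF U]])
    moreover have "rho U v = 0" using v U unfolding Vplus_def by auto
    moreover have "rho (mdeg i U) v = 0" using v mdeg_Nplus[OF U] unfolding Vplus_def by auto
    ultimately show "rho U (dl i v) = 0" using dl_0[OF i] by simp
  qed
qed

inductive_set Ms :: "'v \<Rightarrow> 'v set" for x where
  base: "x \<in> Ms x"
| diag: "m \<in> Ms x \<Longrightarrow> D \<in> Dg \<Longrightarrow> rho D m \<in> Ms x"
| deg: "m \<in> Ms x \<Longrightarrow> i < n \<Longrightarrow> dl i m \<in> Ms x"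
| add: "m1 \<in> Ms x \<Longrightarrow> m2 \<in> Ms x \<Longrightarrow> m1 + m2 \<in> Ms x"
| scal: "m \<in> Ms x \<Longrightarrow> sc c m \<in> Ms x"

inductive_set Rs :: "'v \<Rightarrow> 'v set" for x where
  lowM: "m \<in> Ms x \<Longrightarrow> Y \<in> Lw \<Longrightarrow> rho Y m \<in> Rs x"
| lowR: "r \<in> Rs x \<Longrightarrow> Y \<in> Lw \<Longrightarrow> rho Y r \<in> Rs x"
| zero: "0 \<in> Rs x"
| add: "r1 \<in> Rs x \<Longrightarrow> r2 \<in> Rs x \<Longrightarrow> r1 + r2 \<in> Rs x"
| scal: "r \<in> Rs x \<Longrightarrow> sc c r \<in> Rs x"

definition Ws :: "'v \<Rightarrow> 'v set" where
  "Ws x = {m + r | m r. m \<in> Ms x \<and> r \<in> Rs x}"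

lemma Ms_zero: "0 \<in> Ms x"
  using Ms.scal[OF Ms.base, where c=0] by simp

lemma Rs_sum: "finite P \<Longrightarrow> (\<And>p. p \<in> P \<Longrightarrow> f p \<in> Rs x) \<Longrightarrow> sum f P \<in> Rs x"
  by (induction P rule: finite_induct) (auto intro: Rs.zero Rs.add)

lemma Ws_M: "m \<in> Ms x \<Longrightarrow> m \<in> Ws x"
  unfolding Ws_def using Rs.zero by force

lemma Ws_R: "r \<in> Rs x \<Longrightarrow> r \<in> Ws x"
  unfolding Ws_def using Ms_zero by force

lemma Ws_add: "v \<in> Ws x \<Longrightarrow> w \<in> Ws x \<Longrightarrow> v + w \<in> Ws x"
proof -
  assume "v \<in> Ws x" "w \<in> Ws x"
  then obtain m1 r1 m2 r2 where "v = m1 + r1" "w = m2 + r2" "m1 \<in> Ms x" "m2 \<in> Ms x" "r1 \<in> Rs x" "r2 \<in> Rs x"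
    unfolding Ws_def by auto
  then show ?thesis unfolding Ws_def
    by (intro CollectI exI[of _ "m1 + m2"] exI[of _ "r1 + r2"]) (auto simp: algebra_simps intro: Ms.add Rs.add)
qed

lemma Ws_scale: "v \<in> Ws x \<Longrightarrow> sc c v \<in> Ws x"
proof -
  assume "v \<in> Ws x"
  then obtain m r where "v = m + r" "m \<in> Ms x" "r \<in> Rs x" unfolding Ws_def by auto
  then show ?thesis unfolding Ws_def
    by (intro CollectI exI[of _ "sc c m"] exI[of _ "sc c r"]) (auto simp: V.scale_right_distrib intro: Ms.scal Rs.scal)
qed

lemma Ws_zero: "0 \<in> Ws x"
  by (rule Ws_M[OF Ms_zero])

lemma Ws_sub: "V.subspace (Ws x)"
  unfolding V.subspace_def using Ws_zero Ws_add Ws_scale by auto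

lemma Ms_Vp: "m \<in> Ms x \<Longrightarrow> x \<in> Vplus n d rho \<Longrightarrow> m \<in> Vplus n d rho"
  by (induction m rule: Ms.induct) (auto intro: Vp_diag Vp_dl Vp_add Vp_scale)

lemma Ms_H: "m \<in> Ms x \<Longrightarrow> rho (Hm d) x = sc \<gamma> x \<Longrightarrow> rho (Hm d) m = sc \<gamma> m"
proof (induction m rule: Ms.induct)
  case base then show ?case by simp
next
  case (diag m D)
  have DD: "qmat_elem n d D" "isdiag D" using Dg_qmat[OF diag.hyps(2)] by auto
  have "rho (Hm d) (rho D m) = rho D (rho (Hm d) m) + rho (mbr n q d (Hm d) D) m"
    by (rule rho_comm[OF Hm_sl Dg_sl[OF diag.hyps(2)]])
  also have "\<dots> = sc \<gamma> (rho D m)"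
    using diag.IH diag.prems mbr_H_diag[OF DD(2) DD(1)] rho_zmat rho_scale[OF Dg_sl[OF diag.hyps(2)]] by simp
  finally show ?case .
next
  case (deg m i)
  have "dl i (rho (Hm d) m) = rho (Hm d) (dl i m) + rho (mdeg i (Hm d)) m"
    by (rule dl_comm[OF deg.hyps(2) Hm_sl])
  moreover have "rho (mdeg i (Hm d)) m = 0"
    unfolding mdeg_tens using rho_msc[OF Hm_sl, of 0 m] by simp
  ultimately show ?case using deg dl_scale by simp
next
  case (add m1 m2)
  then show ?case using rho_add[OF Hm_sl] by (simp add: V.scale_right_distrib)
next
  case (scal m c)
  then show ?case using rho_scale[OF Hm_sl] by (simp add: V.scale_left_commute)
qed

end




context mctx begin

lemma Ms_T:
  assumes "m \<in> Ms x" and h: "hdot d h" and ar: "a \<in> rad n q" and Tx: "rho (tens h a) x = 0"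
  shows "rho (tens h a) m = 0"
  using assms(1)
proof (induction m rule: Ms.induct)
  case base then show ?case by (rule Tx)
next
  have la: "lattice n a" using ar unfolding rad_def by auto
  have Tsl: "tens h a \<in> sl_q n q d" by (rule hdot_tens_sl[OF h la])
  {
  case (diag m D)
  have DD: "qmat_elem n d D" "isdiag D" using Dg_qmat[OF diag.hyps(2)] by auto
  have "rho (tens h a) (rho D m) = rho D (rho (tens h a) m) + rho (mbr n q d (tens h a) D) m"
    by (rule rho_comm[OF Tsl Dg_sl[OF diag.hyps(2)]])
  also have "\<dots> = 0"
    using diag.IH mbr_T_diag[OF qp ar h DD(2) DD(1)] rho_zmat rho_0[OF Dg_sl[OF diag.hyps(2)]] by simp
  finally show ?case .
  }
next
  have la: "lattice n a" using ar unfolding rad_def by auto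
  have Tsl: "tens h a \<in> sl_q n q d" by (rule hdot_tens_sl[OF h la])
  {
  case (deg m i)
  have "dl i (rho (tens h a) m) = rho (tens h a) (dl i m) + rho (mdeg i (tens h a)) m"
    by (rule dl_comm[OF deg.hyps(2) Tsl])
  moreover have "rho (mdeg i (tens h a)) m = 0"
    unfolding mdeg_tens using rho_msc[OF Tsl, of _ m] deg.IH by simp
  ultimately show ?case using deg.IH dl_0[OF deg.hyps(2)] by simp
  }
next
  have la: "lattice n a" using ar unfolding rad_def by auto
  have Tsl: "tens h a \<in> sl_q n q d" by (rule hdot_tens_sl[OF h la])
  {
  case (add m1 m2)
  then show ?case using rho_add[OF Tsl] by simp
  }
next
  have la: "lattice n a" using ar unfolding rad_def by auto
  have Tsl: "tens h a \<in> sl_q n q d" by (rule hdot_tens_sl[OF h la])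
  {
  case (scal m c)
  then show ?case using rho_scale[OF Tsl] by simp
  }
qed

lemma Lw_mbr_D: "D \<in> Dg \<Longrightarrow> Y \<in> Lw \<Longrightarrow> mbr n q d D Y \<in> Lw"
proof -
  assume D: "D \<in> Dg" and Y: "Y \<in> Lw"
  obtain i j y where Yd: "Y = sgl i j y" "j < i" "i < d" "qt_elem n y" using Y unfolding Lw_def by auto
  have DD: "qmat_elem n d D" "isdiag D" using Dg_qmat[OF D] by auto
  have "qt_elem n (\<lambda>c. qmult n q (D i i) y c - qmult n q y (D j j) c)"
    by (intro qt_elem_diff qt_elem_mult qmat_elem_qt[OF DD(1)] Yd(4))
  then show ?thesis unfolding Yd(1) mbr_diag_sgl[OF DD(2) DD(1)] Lw_def using Yd(2,3) by blast
qed

lemma Lw_mdeg: "Y \<in> Lw \<Longrightarrow> mdeg i Y \<in> Lw"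
proof -
  assume Y: "Y \<in> Lw"
  obtain r s y where Yd: "Y = sgl r s y" "s < r" "r < d" "qt_elem n y" using Y unfolding Lw_def by auto
  have "qt_elem n (\<lambda>c. of_int (c i) * y c)" by (rule qt_elem_deg[OF Yd(4)])
  then show ?thesis unfolding Yd(1) mdeg_sgl Lw_def using Yd(2,3) by blast
qed

lemma R_diag: "r \<in> Rs x \<Longrightarrow> D \<in> Dg \<Longrightarrow> rho D r \<in> Rs x"
proof (induction r rule: Rs.induct)
  case (lowM m Y)
  have "rho D (rho Y m) = rho Y (rho D m) + rho (mbr n q d D Y) m"
    by (rule rho_comm[OF Dg_sl[OF lowM.prems] Lw_sl[OF lowM.hyps(2)]])
  moreover have "rho Y (rho D m) \<in> Rs x" by (intro Rs.lowM Ms.diag lowM.hyps lowM.prems)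
  moreover have "rho (mbr n q d D Y) m \<in> Rs x" by (intro Rs.lowM lowM.hyps Lw_mbr_D lowM.prems)
  ultimately show ?case by (simp add: Rs.add)
next
  case (lowR r Y)
  have "rho D (rho Y r) = rho Y (rho D r) + rho (mbr n q d D Y) r"
    by (rule rho_comm[OF Dg_sl[OF lowR.prems] Lw_sl[OF lowR.hyps(2)]])
  moreover have "rho D r \<in> Rs x" using lowR.IH lowR.prems by blast
  then have "rho Y (rho D r) \<in> Rs x" using lowR.hyps(2) by (rule Rs.lowR)
  moreover have "rho (mbr n q d D Y) r \<in> Rs x" by (intro Rs.lowR lowR.hyps Lw_mbr_D lowR.prems)
  ultimately show ?case by (simp add: Rs.add)
next
  case zero then show ?case using rho_0[OF Dg_sl] Rs.zero by simp
next
  case (add r1 r2) then show ?case using rho_add[OF Dg_sl] Rs.add by simp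
next
  case (scal r c) then show ?case using rho_scale[OF Dg_sl] Rs.scal by simp
qed

lemma R_dl: "r \<in> Rs x \<Longrightarrow> i < n \<Longrightarrow> dl i r \<in> Rs x"
proof (induction r rule: Rs.induct)
  case (lowM m Y)
  have "dl i (rho Y m) = rho Y (dl i m) + rho (mdeg i Y) m"
    by (rule dl_comm[OF lowM.prems Lw_sl[OF lowM.hyps(2)]])
  moreover have "rho Y (dl i m) \<in> Rs x" by (intro Rs.lowM Ms.deg lowM.hyps lowM.prems)
  moreover have "rho (mdeg i Y) m \<in> Rs x" by (intro Rs.lowM lowM.hyps Lw_mdeg)
  ultimately show ?case by (simp add: Rs.add)
next
  case (lowR r Y)
  have "dl i (rho Y r) = rho Y (dl i r) + rho (mdeg i Y) r"
    by (rule dl_comm[OF lowR.prems Lw_sl[OF lowR.hyps(2)]])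
  moreover have "dl i r \<in> Rs x" using lowR.IH lowR.prems by blast
  then have "rho Y (dl i r) \<in> Rs x" using lowR.hyps(2) by (rule Rs.lowR)
  moreover have "rho (mdeg i Y) r \<in> Rs x" by (intro Rs.lowR lowR.hyps Lw_mdeg)
  ultimately show ?case by (simp add: Rs.add)
next
  case zero then show ?case using dl_0 Rs.zero by simp
next
  case (add r1 r2) then show ?case using dl_add Rs.add by simp
next
  case (scal r c) then show ?case using dl_scale Rs.scal by simp
qed

lemma Xact_M:
  assumes m: "m \<in> Ms x" and xv: "x \<in> Vplus n d rho" and X: "X \<in> sl_q n q d"
  shows "rho X m \<in> Ws x"
proof -
  have s: "(\<Sum>p\<in>lowpairs d. rho (sgl (fst p) (snd p) (X (fst p) (snd p))) m) \<in> Rs x"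
    by (intro Rs_sum finite_lowpairs Rs.lowM m sgl_low_Lw X)
  have dm: "rho (diagp X) m \<in> Ms x" by (intro Ms.diag m diagp_Dg X)
  have u: "rho (upp X) m = 0" using Ms_Vp[OF m xv] upp_Np[OF X] unfolding Vplus_def by auto
  show ?thesis unfolding rho_decomp[OF X, of m] u
    using Ws_add[OF Ws_R[OF s] Ws_M[OF dm]] by simp
qed

lemma Xact_R:
  assumes r: "r \<in> Rs x" and up: "\<forall>U\<in>Nplus_q n d. rho U r \<in> Ws x" and X: "X \<in> sl_q n q d"
  shows "rho X r \<in> Ws x"
proof -
  have s: "(\<Sum>p\<in>lowpairs d. rho (sgl (fst p) (snd p) (X (fst p) (snd p))) r) \<in> Rs x"
    by (intro Rs_sum finite_lowpairs Rs.lowR r sgl_low_Lw X)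
  have dm: "rho (diagp X) r \<in> Rs x" by (intro R_diag r diagp_Dg X)
  have u: "rho (upp X) r \<in> Ws x" using up upp_Np[OF X] by auto
  show ?thesis unfolding rho_decomp[OF X, of r]
    by (intro Ws_add Ws_R s dm u)
qed

lemma Ws_Y: "w \<in> Ws x \<Longrightarrow> Y \<in> Lw \<Longrightarrow> rho Y w \<in> Rs x"
proof -
  assume w: "w \<in> Ws x" and Y: "Y \<in> Lw"
  then obtain m r where "w = m + r" "m \<in> Ms x" "r \<in> Rs x" unfolding Ws_def by auto
  then show ?thesis using rho_add[OF Lw_sl[OF Y]] by (auto intro: Rs.add Rs.lowM Rs.lowR Y)
qed

lemma R_up: "r \<in> Rs x \<Longrightarrow> x \<in> Vplus n d rho \<Longrightarrow> \<forall>U\<in>Nplus_q n d. rho U r \<in> Ws x"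
proof (induction r rule: Rs.induct)
  case (lowM m Y)
  show ?case
  proof
    fix U assume U: "U \<in> Nplus_q n d"
    obtain i j y where Yd: "Y = sgl i j y" "j < i" "i < d" "qt_elem n y" using lowM.hyps(2) unfolding Lw_def by auto
    have Uq: "qmat_elem n d U" using U unfolding Nplus_q_def by auto
    have b: "mbr n q d U Y \<in> sl_q n q d" unfolding Yd(1) using Yd by (intro mbr_sgl_sl Uq) auto
    have "rho U (rho Y m) = rho Y (rho U m) + rho (mbr n q d U Y) m"
      by (rule rho_comm[OF Np_sl[OF U] Lw_sl[OF lowM.hyps(2)]])
    moreover have "rho U m = 0" using Ms_Vp[OF lowM.hyps(1) lowM.prems] U unfolding Vplus_def by auto
    moreover have "rho (mbr n q d U Y) m \<in> Ws x" by (rule Xact_M[OF lowM.hyps(1) lowM.prems b])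
    ultimately show "rho U (rho Y m) \<in> Ws x" using rho_0[OF Lw_sl[OF lowM.hyps(2)]] by simp
  qed
next
  case (lowR r Y)
  show ?case
  proof
    fix U assume U: "U \<in> Nplus_q n d"
    obtain i j y where Yd: "Y = sgl i j y" "j < i" "i < d" "qt_elem n y" using lowR.hyps(2) unfolding Lw_def by auto
    have Uq: "qmat_elem n d U" using U unfolding Nplus_q_def by auto
    have b: "mbr n q d U Y \<in> sl_q n q d" unfolding Yd(1) using Yd by (intro mbr_sgl_sl Uq) auto
    have IH: "\<forall>U\<in>Nplus_q n d. rho U r \<in> Ws x" using lowR.IH lowR.prems by auto
    have "rho U (rho Y r) = rho Y (rho U r) + rho (mbr n q d U Y) r"
      by (rule rho_comm[OF Np_sl[OF U] Lw_sl[OF lowR.hyps(2)]])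
    moreover have "rho U r \<in> Ws x" using IH U by blast
    then have "rho Y (rho U r) \<in> Ws x" by (rule Ws_R[OF Ws_Y[OF _ lowR.hyps(2)]])
    moreover have "rho (mbr n q d U Y) r \<in> Ws x" by (rule Xact_R[OF lowR.hyps(1) IH b])
    ultimately show "rho U (rho Y r) \<in> Ws x" by (simp add: Ws_add)
  qed
next
  case zero then show ?case using rho_0[OF Np_sl] Ws_zero by simp
next
  case (add r1 r2) then show ?case using rho_add[OF Np_sl] Ws_add by simp
next
  case (scal r c) then show ?case using rho_scale[OF Np_sl] Ws_scale by simp
qed

lemma Ws_inv: "w \<in> Ws x \<Longrightarrow> x \<in> Vplus n d rho \<Longrightarrow> X \<in> sl_q n q d \<Longrightarrow> rho X w \<in> Ws x"
proof -
  assume w: "w \<in> Ws x" and xv: "x \<in> Vplus n d rho" and X: "X \<in> sl_q n q d"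
  then obtain m r where "w = m + r" "m \<in> Ms x" "r \<in> Rs x" unfolding Ws_def by auto
  then show ?thesis using rho_add[OF X] Xact_M[OF _ xv X] Xact_R[OF _ R_up[OF _ xv] X] Ws_add by simp
qed

lemma Ws_dl: "w \<in> Ws x \<Longrightarrow> i < n \<Longrightarrow> dl i w \<in> Ws x"
proof -
  assume w: "w \<in> Ws x" and i: "i < n"
  then obtain m r where "w = m + r" "m \<in> Ms x" "r \<in> Rs x" unfolding Ws_def by auto
  then show ?thesis using dl_add[OF i] Ws_add Ws_M[OF Ms.deg] Ws_R[OF R_dl] i by simp
qed

lemma Ws_UNIV: "x \<in> Vplus n d rho \<Longrightarrow> x \<noteq> 0 \<Longrightarrow> Ws x = UNIV"
proof -
  assume xv: "x \<in> Vplus n d rho" and x0: "x \<noteq> 0"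
  have "V.subspace (Ws x) \<and> (\<forall>X\<in>sl_q n q d. \<forall>w\<in>Ws x. rho X w \<in> Ws x) \<and> (\<forall>i<n. \<forall>w\<in>Ws x. dl i w \<in> Ws x)"
    using Ws_sub Ws_inv[OF _ xv] Ws_dl by auto
  then have "Ws x = {0} \<or> Ws x = UNIV" using irr unfolding irreducible_mod_def by blast
  moreover have "x \<in> Ws x" by (rule Ws_M[OF Ms.base])
  ultimately show ?thesis using x0 by auto
qed

end




context mctx begin

definition Eset :: "complex set \<Rightarrow> 'v set" where
  "Eset S = {z. \<exists>\<mu>\<in>S. rho (Hm d) z = sc \<mu> z}"

definition Eig :: "'v set" where
  "Eig = {z. \<exists>\<mu>. rho (Hm d) z = sc \<mu> z}"

lemma H_add: "rho (Hm d) (v + w) = rho (Hm d) v + rho (Hm d) w" by (rule rho_add[OF Hm_sl])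
lemma H_scale: "rho (Hm d) (sc c v) = sc c (rho (Hm d) v)" by (rule rho_scale[OF Hm_sl])
lemma H_0: "rho (Hm d) 0 = 0" by (rule rho_0[OF Hm_sl])
lemma H_diff: "rho (Hm d) (v - w) = rho (Hm d) v - rho (Hm d) w" by (rule rho_diff[OF Hm_sl])

lemma Lw_shift:
  assumes Y: "Y \<in> Lw" and v: "rho (Hm d) v = sc lm v"
  shows "\<exists>\<delta>. Re \<delta> < 0 \<and> rho (Hm d) (rho Y v) = sc (lm + \<delta>) (rho Y v)"
proof -
  obtain i j y where Yd: "Y = sgl i j y" "j < i" "i < d" "qt_elem n y" using Y unfolding Lw_def by auto
  have jd: "j < d" using Yd by auto
  define \<delta> where "\<delta> = h0 d i i - h0 d j j"
  have re: "Re \<delta> < 0" unfolding \<delta>_def h0_diff[OF Yd(3) jd] using Yd(2) by simp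
  have "rho (Hm d) (rho Y v) = rho Y (rho (Hm d) v) + rho (mbr n q d (Hm d) Y) v"
    by (rule rho_comm[OF Hm_sl Lw_sl[OF Y]])
  also have "\<dots> = sc lm (rho Y v) + sc \<delta> (rho Y v)"
    unfolding v rho_scale[OF Lw_sl[OF Y]] Yd(1) mbr_H_sgl[OF Yd(3) jd Yd(4)] \<delta>_def
    using rho_msc[OF Lw_sl[OF Y[unfolded Yd(1)]]] rho_scale[OF Lw_sl[OF Y[unfolded Yd(1)]]] by simp
  also have "\<dots> = sc (lm + \<delta>) (rho Y v)" by (simp add: V.scale_left_distrib)
  finally show ?thesis using re by blast
qed

lemma rho_span_pres:
  assumes X: "X \<in> sl_q n q d" and E: "\<And>e. e \<in> A \<Longrightarrow> rho X e \<in> V.span A" and v: "v \<in> V.span A"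
  shows "rho X v \<in> V.span A"
  using v
proof (induction rule: V.span_induct_alt)
  case base then show ?case using rho_0[OF X] V.span_zero by simp
next
  case (step c x y)
  then show ?case using rho_add[OF X] rho_scale[OF X] E
    by (simp add: V.span_add V.span_scale)
qed

lemma R_eig: "r \<in> Rs x \<Longrightarrow> rho (Hm d) x = sc \<gamma> x \<Longrightarrow> r \<in> V.span (Eset {\<mu>. Re \<mu> < Re \<gamma>})"
proof (induction r rule: Rs.induct)
  case (lowM m Y)
  have "rho (Hm d) m = sc \<gamma> m" by (rule Ms_H[OF lowM.hyps(1) lowM.prems])
  then obtain \<delta> where "Re \<delta> < 0" "rho (Hm d) (rho Y m) = sc (\<gamma> + \<delta>) (rho Y m)"
    using Lw_shift[OF lowM.hyps(2)] by blast
  then have "rho Y m \<in> Eset {\<mu>. Re \<mu> < Re \<gamma>}" unfolding Eset_def by force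
  then show ?case by (rule V.span_base)
next
  case (lowR r Y)
  have E: "rho Y e \<in> V.span (Eset {\<mu>. Re \<mu> < Re \<gamma>})" if e: "e \<in> Eset {\<mu>. Re \<mu> < Re \<gamma>}" for e
  proof -
    obtain lm where l: "Re lm < Re \<gamma>" "rho (Hm d) e = sc lm e" using e unfolding Eset_def by auto
    then obtain \<delta> where "Re \<delta> < 0" "rho (Hm d) (rho Y e) = sc (lm + \<delta>) (rho Y e)"
      using Lw_shift[OF lowR.hyps(2)] by blast
    then have "rho Y e \<in> Eset {\<mu>. Re \<mu> < Re \<gamma>}" unfolding Eset_def using l(1)
      by (intro CollectI bexI[of _ "lm + \<delta>"]) auto
    then show ?thesis by (rule V.span_base)
  qed
  show ?case by (rule rho_span_pres[OF Lw_sl[OF lowR.hyps(2)] E lowR.IH[OF lowR.prems]])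
next
  case zero then show ?case by (simp add: V.span_zero)
next
  case (add r1 r2) then show ?case by (simp add: V.span_add)
next
  case (scal r c) then show ?case by (simp add: V.span_scale)
qed

lemma span_fin: "z \<in> V.span A \<Longrightarrow> \<exists>t. finite t \<and> t \<subseteq> A \<and> z \<in> V.span t"
proof -
  assume "z \<in> V.span A"
  then obtain t r where "z = (\<Sum>a\<in>t. sc (r a) a)" "finite t" "t \<subseteq> A"
    unfolding V.span_explicit by auto
  moreover have "(\<Sum>a\<in>t. sc (r a) a) \<in> V.span t"
    by (intro V.span_sum V.span_scale V.span_base)
  ultimately show ?thesis by blast
qed

lemma H_span: "(\<And>e. e \<in> t \<Longrightarrow> e \<in> Eig) \<Longrightarrow> v \<in> V.span t \<Longrightarrow> rho (Hm d) v \<in> V.span t"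
proof (rule rho_span_pres[OF Hm_sl])
  fix e assume "\<And>e. e \<in> t \<Longrightarrow> e \<in> Eig" "e \<in> t"
  then obtain \<mu> where "rho (Hm d) e = sc \<mu> e" unfolding Eig_def by auto
  then show "rho (Hm d) e \<in> V.span t" using \<open>e \<in> t\<close> by (simp add: V.span_scale V.span_base)
qed

lemma sep_fin:
  assumes "finite t" "t \<subseteq> Eset S" "lm \<notin> S"
  shows "z \<in> V.span t \<Longrightarrow> rho (Hm d) z = sc lm z \<Longrightarrow> z = 0"
  using assms
proof (induction t arbitrary: z rule: finite_induct)
  case empty then show ?case by simp
next
  case (insert e t z)
  obtain \<mu> where mu: "\<mu> \<in> S" "rho (Hm d) e = sc \<mu> e" using insert.prems(3) unfolding Eset_def by auto
  have ml: "\<mu> \<noteq> lm" using mu insert.prems by auto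
  obtain k where zk: "z - sc k e \<in> V.span t" using insert.prems(1) V.span_breakdown_eq by blast
  define z' where "z' = z - sc k e"
  have tE: "\<And>e. e \<in> t \<Longrightarrow> e \<in> Eig" using insert.prems(3) unfolding Eset_def Eig_def by auto
  have Hz': "rho (Hm d) z' = sc lm z - sc k (sc \<mu> e)"
    unfolding z'_def by (simp only: H_diff H_scale insert.prems(2) mu(2))
  define w where "w = rho (Hm d) z' - sc \<mu> z'"
  have w_sp: "w \<in> V.span t" unfolding w_def
    using H_span[OF tE zk[folded z'_def]] zk[folded z'_def] by (intro V.span_diff V.span_scale) auto
  have w_eq: "w = sc (lm - \<mu>) z"
    unfolding w_def Hz' unfolding z'_def by (simp add: algebra_simps V.scale_left_diff_distrib V.scale_right_diff_distrib)
  have Hw: "rho (Hm d) w = sc lm w"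
    unfolding w_eq H_scale insert.prems(2) by (simp add: V.scale_left_commute)
  have "w = 0" using insert.IH[OF w_sp Hw] insert.prems(3,4) by auto
  then show ?case using ml unfolding w_eq by simp
qed

lemma sep:
  assumes "z \<in> V.span (Eset S)" "lm \<notin> S" "rho (Hm d) z = sc lm z"
  shows "z = 0"
proof -
  obtain t where "finite t" "t \<subseteq> Eset S" "z \<in> V.span t" using span_fin[OF assms(1)] by blast
  then show ?thesis using sep_fin assms(2,3) by blast
qed

end




context mctx begin

lemma shift_span:
  assumes v: "v \<in> V.span (Eset L)"
  shows "rho (Hm d) v - sc nu v \<in> V.span (Eset (L - {nu}))"
  using v
proof (induction rule: V.span_induct_alt)
  case base then show ?case using H_0 V.span_zero by simp
next
  case (step c x y)
  obtain lm where l: "lm \<in> L" "rho (Hm d) x = sc lm x" using step.hyps(1) unfolding Eset_def by auto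
  have fx: "rho (Hm d) x - sc nu x = sc (lm - nu) x" using l(2) by (simp add: V.scale_left_diff_distrib)
  have fxs: "rho (Hm d) x - sc nu x \<in> V.span (Eset (L - {nu}))"
  proof (cases "lm = nu")
    case True then show ?thesis unfolding fx by (simp add: V.span_zero)
  next
    case False
    then have "x \<in> Eset (L - {nu})" using l unfolding Eset_def by auto
    then show ?thesis unfolding fx by (intro V.span_scale V.span_base)
  qed
  have "rho (Hm d) (sc c x + y) - sc nu (sc c x + y) = sc c (rho (Hm d) x - sc nu x) + (rho (Hm d) y - sc nu y)"
    by (simp add: H_add H_scale V.scale_right_diff_distrib V.scale_right_distrib mult.commute)
  then show ?case using fxs step.IH by (simp add: V.span_add V.span_scale)
qed

lemma eigspace_sub: "V.subspace {z. rho (Hm d) z = sc mu z}"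
  unfolding V.subspace_def
proof (intro conjI ballI allI)
  show "0 \<in> {z. rho (Hm d) z = sc mu z}" using H_0 by simp
  fix x y c assume x: "x \<in> {z. rho (Hm d) z = sc mu z}" and y: "y \<in> {z. rho (Hm d) z = sc mu z}"
  then show "x + y \<in> {z. rho (Hm d) z = sc mu z}" using H_add by (simp add: V.scale_right_distrib)
  show "sc c x \<in> {z. rho (Hm d) z = sc mu z}" using x H_scale V.scale_left_commute by simp
qed

lemma comp_lem:
  assumes S: "V.subspace S" and HS: "\<And>v. v \<in> S \<Longrightarrow> rho (Hm d) v \<in> S"
  shows "finite L \<Longrightarrow> v \<in> S \<Longrightarrow> v \<in> V.span (Eset L) \<Longrightarrow> v \<in> V.span (S \<inter> Eig)"
proof (induction "card L" arbitrary: L v rule: less_induct)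
  case less
  show ?case
  proof (cases "card L \<le> 1")
    case True
    then have all: "\<forall>a\<in>L. \<forall>b\<in>L. a = b" using card_le_Suc0_iff_eq[OF less.prems(1)] by simp
    have "L = {} \<or> (\<exists>mu. L = {mu})"
    proof (cases "L = {}")
      case False
      then obtain mu where "mu \<in> L" by blast
      then have "L = {mu}" using all by blast
      then show ?thesis by blast
    qed simp
    then show ?thesis
    proof
      assume "L = {}"
      then have "Eset L = {}" unfolding Eset_def by auto
      then have "v = 0" using less.prems(3) by simp
      then show ?thesis by (simp add: V.span_zero)
    next
      assume "\<exists>mu. L = {mu}"
      then obtain mu where L: "L = {mu}" by blast
      have "Eset L = {z. rho (Hm d) z = sc mu z}" unfolding Eset_def L by auto
      then have "V.subspace (Eset L)" using eigspace_sub by simp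
      then have sp: "V.span (Eset L) = Eset L" by (rule V.span_eq_iff[THEN iffD2])
      have "v \<in> Eset L" using less.prems(3) sp by blast
      then have "v \<in> S \<inter> Eig" using less.prems(2) unfolding Eset_def Eig_def by auto
      then show ?thesis by (rule V.span_base)
    qed
  next
    case False
    then have "2 \<le> card L" by simp
    have "\<not> (\<forall>a\<in>L. \<forall>b\<in>L. a = b)" using card_le_Suc0_iff_eq[OF less.prems(1)] False by simp
    then obtain mu nu where mn: "mu \<in> L" "nu \<in> L" "mu \<noteq> nu" by blast
    have fin1: "finite (L - {nu})" "finite (L - {mu})" using less.prems(1) by auto
    have c1: "card (L - {nu}) < card L" "card (L - {mu}) < card L"
    proof -
      have "0 < card L" using mn less.prems(1) card_gt_0_iff by blast
      then show "card (L - {nu}) < card L" "card (L - {mu}) < card L" using mn less.prems(1) by auto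
    qed
    have a1: "rho (Hm d) v - sc nu v \<in> V.span (S \<inter> Eig)"
      by (rule less.hyps[OF c1(1) fin1(1)])
         (auto intro!: V.subspace_diff[OF S] V.subspace_scale[OF S] HS less.prems(2) shift_span less.prems(3))
    have a2: "rho (Hm d) v - sc mu v \<in> V.span (S \<inter> Eig)"
      by (rule less.hyps[OF c1(2) fin1(2)])
         (auto intro!: V.subspace_diff[OF S] V.subspace_scale[OF S] HS less.prems(2) shift_span less.prems(3))
    have "(rho (Hm d) v - sc nu v) - (rho (Hm d) v - sc mu v) = sc (mu - nu) v"
      by (simp add: V.scale_left_diff_distrib)
    then have "sc (mu - nu) v \<in> V.span (S \<inter> Eig)" using V.span_diff[OF a1 a2] by simp
    then have "sc (1 / (mu - nu)) (sc (mu - nu) v) \<in> V.span (S \<inter> Eig)" by (rule V.span_scale)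
    then show ?thesis using mn(3) by simp
  qed
qed

lemma all_in_span: "\<exists>L. finite L \<and> v \<in> V.span (Eset L)"
proof -
  have "v \<in> V.span (\<Union>{wspace n d sc rho dl lam mu | lam mu. True})"
    using integ unfolding integrable_fd_def by blast
  moreover have "\<Union>{wspace n d sc rho dl lam mu | lam mu. True} \<subseteq> Eig"
    unfolding Eig_def wspace_def using hdot_h0 by blast
  ultimately have "v \<in> V.span Eig" using V.span_mono by blast
  then obtain t where t: "finite t" "t \<subseteq> Eig" "v \<in> V.span t" using span_fin by blast
  define L where "L = (\<lambda>z. SOME mu. rho (Hm d) z = sc mu z) ` t"
  have "t \<subseteq> Eset L"
  proof
    fix z assume "z \<in> t"
    then have "\<exists>mu. rho (Hm d) z = sc mu z" using t(2) unfolding Eig_def by auto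
    then have "rho (Hm d) z = sc (SOME mu. rho (Hm d) z = sc mu z) z" by (rule someI_ex)
    then show "z \<in> Eset L" unfolding Eset_def L_def using \<open>z \<in> t\<close> by auto
  qed
  then have "v \<in> V.span (Eset L)" using t(3) V.span_mono by blast
  moreover have "finite L" unfolding L_def using t(1) by simp
  ultimately show ?thesis by blast
qed

lemma comp_all:
  assumes S: "V.subspace S" and HS: "\<And>v. v \<in> S \<Longrightarrow> rho (Hm d) v \<in> S" and v: "v \<in> S"
  shows "v \<in> V.span (S \<inter> Eig)"
  using all_in_span[of v] comp_lem[OF S HS] v by blast

lemma Lmain:
  assumes xv: "x \<in> Vplus n d rho" and x0: "x \<noteq> 0" and Hx: "rho (Hm d) x = sc g x"
    and y0: "y \<noteq> 0" and Hy: "rho (Hm d) y = sc lm y"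
  shows "(lm = g \<and> y \<in> Ms x) \<or> Re lm < Re g"
proof (rule ccontr)
  assume na: "\<not> ?thesis"
  have "y \<in> Ws x" using Ws_UNIV[OF xv x0] by simp
  then obtain m r where y: "y = m + r" and m: "m \<in> Ms x" and r: "r \<in> Rs x" unfolding Ws_def by auto
  have Hm': "rho (Hm d) m = sc g m" by (rule Ms_H[OF m Hx])
  have rs: "r \<in> V.span (Eset {mu. Re mu < Re g})" by (rule R_eig[OF r Hx])
  show False
  proof (cases "lm = g")
    case True
    have "rho (Hm d) r = sc g r"
    proof -
      have "r = y - m" using y by simp
      then show ?thesis using Hy Hm' True H_diff by (simp add: V.scale_right_diff_distrib)
    qed
    then have "r = 0" using sep[OF rs] by auto
    then have "y \<in> Ms x" using y m by simp
    then show False using na True by simp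
  next
    case False
    have "m \<in> Eset (insert g {mu. Re mu < Re g})" using Hm' unfolding Eset_def by auto
    then have "m \<in> V.span (Eset (insert g {mu. Re mu < Re g}))" by (rule V.span_base)
    moreover have "r \<in> V.span (Eset (insert g {mu. Re mu < Re g}))"
      using rs V.span_mono[of "Eset {mu. Re mu < Re g}" "Eset (insert g {mu. Re mu < Re g})"]
      unfolding Eset_def by auto
    ultimately have "y \<in> V.span (Eset (insert g {mu. Re mu < Re g}))" using y V.span_add by simp
    moreover have "lm \<notin> insert g {mu. Re mu < Re g}" using False na by auto
    ultimately have "y = 0" using sep Hy by blast
    then show False using y0 by simp
  qed
qed

lemma main_loc:
  assumes h: "hdot d h" and ar: "a \<in> rad n q"
    and u: "u \<in> Vplus n d rho" and Tu: "rho (tens h a) u \<noteq> 0"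
    and w: "w \<in> Vplus n d rho" and w0: "w \<noteq> 0"
  shows "rho (tens h a) w \<noteq> 0"
proof
  assume Tw: "rho (tens h a) w = 0"
  have la: "lattice n a" using ar unfolding rad_def by auto
  have Tsl: "tens h a \<in> sl_q n q d" by (rule hdot_tens_sl[OF h la])
  have TH: "rho (tens h a) (rho (Hm d) v) = rho (Hm d) (rho (tens h a) v)" for v
    using rho_comm[OF Tsl Hm_sl, of v] mbr_T_diag[OF qp ar h Hm_diag Hm_qmat] rho_zmat by simp
  define K where "K = {v \<in> Vplus n d rho. rho (tens h a) v = 0}"
  have Ksub: "V.subspace K" unfolding K_def V.subspace_def
    using Vp_zero Vp_add Vp_scale rho_0[OF Tsl] rho_add[OF Tsl] rho_scale[OF Tsl] by auto
  have HK: "rho (Hm d) v \<in> K" if "v \<in> K" for v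
    using that Vp_diag[OF Hm_Dg] TH H_0 unfolding K_def by auto
  have wK: "w \<in> V.span (K \<inter> Eig)" using comp_all[OF Ksub HK] w Tw unfolding K_def by auto
  obtain w1 where w1: "w1 \<in> K" "w1 \<in> Eig" "w1 \<noteq> 0"
  proof (rule ccontr)
    assume "\<not> thesis"
    then have "K \<inter> Eig \<subseteq> {0}" using that by blast
    then have "V.span (K \<inter> Eig) \<subseteq> {0}" using V.span_mono[of "K \<inter> Eig" "{0}"] by simp
    then show False using wK w0 by blast
  qed
  obtain b where b: "rho (Hm d) w1 = sc b w1" using w1(2) unfolding Eig_def by auto
  have uV: "u \<in> V.span (Vplus n d rho \<inter> Eig)"
    by (rule comp_all[OF Vp_sub _ u]) (rule Vp_diag[OF Hm_Dg])
  obtain u1 where u1: "u1 \<in> Vplus n d rho" "u1 \<in> Eig" "rho (tens h a) u1 \<noteq> 0"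
  proof (rule ccontr)
    assume "\<not> thesis"
    then have z: "\<And>e. e \<in> Vplus n d rho \<inter> Eig \<Longrightarrow> rho (tens h a) e = 0" using that by blast
    have "rho (tens h a) u' = 0" if "u' \<in> V.span (Vplus n d rho \<inter> Eig)" for u'
      using that
    proof (induction rule: V.span_induct_alt)
      case base then show ?case using rho_0[OF Tsl] .
    next
      case (step c x y) then show ?case using z rho_add[OF Tsl] rho_scale[OF Tsl] by simp
    qed
    then show False using uV Tu by blast
  qed
  obtain al where al: "rho (Hm d) u1 = sc al u1" using u1(2) unfolding Eig_def by auto
  have u10: "u1 \<noteq> 0" using u1(3) rho_0[OF Tsl] by auto
  have w1v: "w1 \<in> Vplus n d rho" "rho (tens h a) w1 = 0" using w1(1) unfolding K_def by auto
  have c1: "(al = b \<and> u1 \<in> Ms w1) \<or> Re al < Re b" by (rule Lmain[OF w1v(1) w1(3) b u10 al])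
  have c2: "(b = al \<and> w1 \<in> Ms u1) \<or> Re b < Re al" by (rule Lmain[OF u1(1) u10 al w1(3) b])
  have "\<not> (al = b \<and> u1 \<in> Ms w1)"
  proof
    assume "al = b \<and> u1 \<in> Ms w1"
    then have "rho (tens h a) u1 = 0" using Ms_T[OF _ h ar w1v(2)] by blast
    then show False using u1(3) by simp
  qed
  then show False using c1 c2 by auto
qed

end


theorem lemma5p12:
  fixes n d :: nat
    and q :: "nat \<Rightarrow> nat \<Rightarrow> complex"
    and sc :: "complex \<Rightarrow> 'v::ab_group_add \<Rightarrow> 'v"
    and rho :: "qmat \<Rightarrow> 'v \<Rightarrow> 'v"
    and dl :: "nat \<Rightarrow> 'v \<Rightarrow> 'v"
    and h :: "nat \<Rightarrow> nat \<Rightarrow> complex"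
    and a :: lat
  assumes "2 \<le> n" and "2 \<le> d"
    and "qparam n q"
    and "is_module n q d sc rho dl"
    and "irreducible_mod n q d sc rho dl"
    and "integrable_fd n d sc rho dl"
    and "hdot d h"
    and "a \<in> rad n q"
    and "\<exists>v\<in>Vplus n d rho. rho (tens h a) v \<noteq> 0"
  shows "\<forall>w\<in>Vplus n d rho. w \<noteq> 0 \<longrightarrow> rho (tens h a) w \<noteq> 0"
proof -
  interpret M: mctx n d q sc rho dl
    by unfold_locales (rule assms)+
  show ?thesis using M.main_loc[OF assms(7) assms(8)] assms(9) by blast
qed

end
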